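(* Consider the frameless ALOHA model with $n$ users and $m$ slots and its iterative (peeling) successive interference cancellation decoder, with state $S_u=(\mathtt{C}_u,\mathtt{R}_u)$ when $u$ users are unresolved, as described in the context. Let $1\le u\le n$ and suppose the decoder is in state $S_u=(c_u,r_u)$ with $r_u>0$. Then for integers $a_u,b_u$ with $0\le b_u\le c_u$, $a_u\ge 1$ and $a_u-b_u\le r_u$, $$\Pr\{S_{u-1}=(c_u-b_u,\; r_u-a_u+b_u)\mid S_u=(c_u,r_u)\} = \binom{c_u}{b_u} q_u^{\,b_u}(1-q_u)^{c_u-b_u}\binom{r_u-1}{a_u-1}\left(\frac1u\right)^{a_u-1}\left(1-\frac1u\right)^{r_u-a_u},$$ where $$q_u=\frac{\displaystyle\sum_{d=2}^{n-u+2}\Omega_d\, d(d-1)\,\frac1n\,\frac{u-1}{n-1}\,\frac{\binom{n-u}{d-2}}{\binom{n-2}{d-2}}}{\displaystyle 1-\sum_{d=1}^{n-u+1}\Omega_d\, u\,\frac{\binom{n-u}{d-1}}{\binom{n}{d}}-\sum_{d=0}^{n-u}\Omega_d\,\frac{\binom{n-u}{d}}{\binom{n}{d}}}.$$ Here $b_u$ is the number of slots that leave the cloud and enter the ripple in the transition from $u$ to $u-1$ unresolved users, and $a_u$ is the number of slots that leave the ripple in that transition; $q_u$ is the probability that a slot in the cloud when $u$ users are unresolved is in the ripple when $u-1$ users are unresolved.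
   Context: Frameless ALOHA model: there are $n$ users and $m$ slots. Each slot independently has a (original) degree $d\in\{0,1,\dots,n\}$ with probability $\Omega_d$ (the slot degree distribution; in the basic model each user transmits in each slot independently with probability $p=\beta/n$, so $\Omega_d=\binom{n}{d}p^d(1-p)^{n-d}$), and, given its degree $d$, the set of users transmitting in the slot (its neighbours) is a uniformly random $d$-subset of the $n$ users, chosen without replacement. This defines a bipartite graph between users and slots. Collision channel: a slot with exactly one (uncancelled) transmission is decodable, slots with two or more are not. Decoding (peeling / successive interference cancellation): initially all $n$ users are unresolved ($u=n$). The reduced degree of a slot is the number of its neighbours that are still unresolved. The ripple is the set of slots of reduced degree $1$, with cardinality $\mathtt{R}_u$ (value $r_u$) when $u$ users are unresolved; the cloud is the set of slots of reduced degree at least $2$, with cardinality $\mathtt{C}_u$ (value $c_u$). The decoder state is $S_u=(\mathtt{C}_u,\mathtt{R}_u)$. At each step, if the ripple is nonempty, the decoder picks a slot from the ripple uniformly at random, resolves its unique unresolved neighbour user, and removes all edges of that user from the graph (so $u$ decreases by $1$); if the ripple is empty, decoding stops (fails). Thus $c_{u-1}=c_u-b_u$ and $r_{u-1}=r_u-a_u+b_u$. *)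

theory Defs
  imports "HOL-Probability.Probability"
begin

(* Users are 0..<n, slots are 0..<m.  A bipartite graph is G :: nat => nat set,
   G j = set of users transmitting in slot j (for j < m). *)

definition slot_pmf :: "nat \<Rightarrow> nat pmf \<Rightarrow> nat set pmf" where
  "slot_pmf n \<Omega> = bind_pmf \<Omega> (\<lambda>d. pmf_of_set {S. S \<subseteq> {..<n} \<and> card S = d})"

definition graph_pmf :: "nat \<Rightarrow> nat \<Rightarrow> nat pmf \<Rightarrow> (nat \<Rightarrow> nat set) pmf" where
  "graph_pmf n m \<Omega> = Pi_pmf {..<m} {} (\<lambda>_. slot_pmf n \<Omega>)"

definition ripple :: "nat \<Rightarrow> (nat \<Rightarrow> nat set) \<Rightarrow> nat set \<Rightarrow> nat set" where
  "ripple m G U = {j. j < m \<and> card (G j \<inter> U) = 1}"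

definition cloud :: "nat \<Rightarrow> (nat \<Rightarrow> nat set) \<Rightarrow> nat set \<Rightarrow> nat set" where
  "cloud m G U = {j. j < m \<and> card (G j \<inter> U) \<ge> 2}"

definition dec_step :: "nat \<Rightarrow> (nat \<Rightarrow> nat set) \<times> nat set \<Rightarrow> ((nat \<Rightarrow> nat set) \<times> nat set) pmf" where
  "dec_step m s = (case s of (G, U) \<Rightarrow>
     (if ripple m G U = {} then return_pmf (G, U)
      else map_pmf (\<lambda>j. (G, U - {the_elem (G j \<inter> U)})) (pmf_of_set (ripple m G U))))"

fun dec_state :: "nat \<Rightarrow> nat \<Rightarrow> nat pmf \<Rightarrow> nat \<Rightarrow> ((nat \<Rightarrow> nat set) \<times> nat set) pmf" where
  "dec_state n m \<Omega> 0 = map_pmf (\<lambda>G. (G, {..<n})) (graph_pmf n m \<Omega>)"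
| "dec_state n m \<Omega> (Suc k) = bind_pmf (dec_state n m \<Omega> k) (dec_step m)"

definition dec_trans :: "nat \<Rightarrow> nat \<Rightarrow> nat pmf \<Rightarrow> nat \<Rightarrow>
    (((nat \<Rightarrow> nat set) \<times> nat set) \<times> ((nat \<Rightarrow> nat set) \<times> nat set)) pmf" where
  "dec_trans n m \<Omega> k = bind_pmf (dec_state n m \<Omega> k) (\<lambda>s. map_pmf (\<lambda>s'. (s, s')) (dec_step m s))"

definition in_state :: "nat \<Rightarrow> nat \<Rightarrow> nat \<Rightarrow> nat \<Rightarrow> (nat \<Rightarrow> nat set) \<times> nat set \<Rightarrow> bool" where
  "in_state m u c r s = (case s of (G, U) \<Rightarrow>
     card U = u \<and> card (cloud m G U) = c \<and> card (ripple m G U) = r)"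

definition q_u :: "nat \<Rightarrow> nat pmf \<Rightarrow> nat \<Rightarrow> real" where
  "q_u n \<Omega> u =
    (\<Sum>d = 2..n - u + 2. pmf \<Omega> d * real d * (real d - 1) * (1 / real n)
        * ((real u - 1) / (real n - 1))
        * (real ((n - u) choose (d - 2)) / real ((n - 2) choose (d - 2))))
    / (1 - (\<Sum>d = 1..n - u + 1. pmf \<Omega> d * real u
              * (real ((n - u) choose (d - 1)) / real (n choose d)))
         - (\<Sum>d = 0..n - u. pmf \<Omega> d * (real ((n - u) choose d) / real (n choose d))))"

end

theory Submission
  imports Defs
begin

lemma Sd_finite: "finite {S. S \<subseteq> {..<n::nat} \<and> card S = d}"
  by (rule finite_subset[of _ "Pow {..<n}"]) auto

lemma Sd_ne: "d \<le> n \<Longrightarrow> {S. S \<subseteq> {..<n::nat} \<and> card S = d} \<noteq> {}"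
  by (rule ccontr) (auto dest: spec[of _ "{..<d}"])

lemma set_slot_pmf:
  assumes "set_pmf \<Omega> \<subseteq> {..n}"
  shows "set_pmf (slot_pmf n \<Omega>) \<subseteq> Pow {..<n}"
proof
  fix S assume "S \<in> set_pmf (slot_pmf n \<Omega>)"
  then obtain d where d: "d \<in> set_pmf \<Omega>" and S: "S \<in> set_pmf (pmf_of_set {S. S \<subseteq> {..<n} \<and> card S = d})"
    unfolding slot_pmf_def by auto
  have "d \<le> n" using d assms by auto
  with S show "S \<in> Pow {..<n}" using Sd_finite[of n d] Sd_ne[of d n] by auto
qed

lemma set_graph_pmf:
  assumes "set_pmf \<Omega> \<subseteq> {..n}"
  shows "set_pmf (graph_pmf n m \<Omega>) \<subseteq> PiE_dflt {..<m} {} (\<lambda>_. Pow {..<n})"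
  unfolding graph_pmf_def using set_slot_pmf[OF assms]
  by (auto simp: set_Pi_pmf PiE_dflt_def)

lemma finite_PiE_dflt_Pow: "finite (PiE_dflt {..<m::nat} {} (\<lambda>_. Pow {..<n::nat}))"
  by (intro finite_PiE_dflt) auto

definition stepU :: "nat \<Rightarrow> (nat \<Rightarrow> nat set) \<Rightarrow> nat set \<Rightarrow> nat set pmf" where
  "stepU m G V = (if ripple m G V = {} then return_pmf V
      else map_pmf (\<lambda>j. V - {the_elem (G j \<inter> V)}) (pmf_of_set (ripple m G V)))"

lemma finite_ripple[simp]: "finite (ripple m G U)"
  unfolding ripple_def by auto
lemma finite_cloud[simp]: "finite (cloud m G U)"
  unfolding cloud_def by auto

lemma dec_step_eq: "dec_step m (G, V) = map_pmf (Pair G) (stepU m G V)"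
  unfolding dec_step_def stepU_def by (auto simp: map_pmf_comp)

fun decU :: "nat \<Rightarrow> nat \<Rightarrow> (nat \<Rightarrow> nat set) \<Rightarrow> nat \<Rightarrow> nat set pmf" where
  "decU n m G 0 = return_pmf {..<n}"
| "decU n m G (Suc k) = bind_pmf (decU n m G k) (stepU m G)"

lemma dec_state_eq:
  "dec_state n m \<Omega> k = bind_pmf (graph_pmf n m \<Omega>) (\<lambda>G. map_pmf (Pair G) (decU n m G k))"
proof (induction k)
  case 0
  then show ?case by (simp add: map_pmf_def bind_return_pmf)
next
  case (Suc k)
  show ?case
    by (simp add: Suc bind_assoc_pmf bind_map_pmf map_bind_pmf dec_step_eq map_pmf_def bind_return_pmf)
qed

lemma dec_trans_eq:
  "dec_trans n m \<Omega> k = bind_pmf (graph_pmf n m \<Omega>)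
     (\<lambda>G. bind_pmf (decU n m G k) (\<lambda>V. map_pmf (\<lambda>V'. ((G, V), (G, V'))) (stepU m G V)))"
  unfolding dec_trans_def dec_state_eq
  by (simp add: bind_assoc_pmf bind_map_pmf dec_step_eq map_pmf_comp)

lemma set_stepU: "finite V \<Longrightarrow> set_pmf (stepU m G V) \<subseteq> Pow V"
  unfolding stepU_def by (auto simp: ripple_def)

lemma set_decU: "set_pmf (decU n m G k) \<subseteq> Pow {..<n}"
proof (induction k)
  case (Suc k)
  show ?case
  proof
    fix W assume "W \<in> set_pmf (decU n m G (Suc k))"
    then obtain V where V: "V \<in> set_pmf (decU n m G k)" "W \<in> set_pmf (stepU m G V)" by auto
    have "V \<subseteq> {..<n}" using V Suc by auto
    then have "finite V" using finite_subset by blast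
    with V show "W \<in> Pow {..<n}" using set_stepU[of V m G] \<open>V \<subseteq> {..<n}\<close> by auto
  qed
qed simp

lemma stepU_same:
  assumes "ripple m G V = ripple m G' V" "\<And>i. i \<in> ripple m G V \<Longrightarrow> G i \<inter> V = G' i \<inter> V"
  shows "stepU m G V = stepU m G' V"
proof (cases "ripple m G V = {}")
  case False
  then have "set_pmf (pmf_of_set (ripple m G V)) = ripple m G V" by simp
  then show ?thesis unfolding stepU_def using assms False
    by (intro if_cong refl map_pmf_cong) auto
qed (use assms in \<open>simp add: stepU_def\<close>)

lemma decU_dep:
  assumes "\<And>i. i < m \<Longrightarrow> G i = G' i"
  shows "decU n m G k = decU n m G' k"
proof -
  have "stepU m G V = stepU m G' V" for V
    by (rule stepU_same) (auto simp: ripple_def assms)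
  then have "stepU m G = stepU m G'" by auto
  then show ?thesis by (induction k) auto
qed

lemma ripple_elem:
  assumes "i \<in> ripple m G V"
  shows "G i \<inter> V = {the_elem (G i \<inter> V)}" "the_elem (G i \<inter> V) \<in> V" "the_elem (G i \<inter> V) \<in> G i"
proof -
  have "card (G i \<inter> V) = 1" using assms by (auto simp: ripple_def)
  then obtain e where e: "G i \<inter> V = {e}" by (auto simp: card_Suc_eq)
  then show "G i \<inter> V = {the_elem (G i \<inter> V)}" "the_elem (G i \<inter> V) \<in> V" "the_elem (G i \<inter> V) \<in> G i"
    by auto
qed

lemma pmf_stepU:
  "pmf (stepU m G V) W = (if ripple m G V = {} then (if W = V then 1 else 0)
     else real (card {i \<in> ripple m G V. V - {the_elem (G i \<inter> V)} = W}) / real (card (ripple m G V)))"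
proof (cases "ripple m G V = {}")
  case True
  then show ?thesis by (simp add: stepU_def indicator_def)
next
  case False
  have "ripple m G V \<inter> (\<lambda>j. V - {the_elem (G j \<inter> V)}) -` {W} = {i \<in> ripple m G V. V - {the_elem (G i \<inter> V)} = W}"
    by auto
  with False show ?thesis
    by (simp add: stepU_def pmf_map measure_pmf_of_set)
qed

lemma pmf_stepU_nz:
  assumes "pmf (stepU m G V) W \<noteq> 0"
  shows "(W = V \<and> ripple m G V = {}) \<or> (ripple m G V \<noteq> {} \<and> (\<exists>x\<in>V. W = V - {x}))"
proof (cases "ripple m G V = {}")
  case True
  then show ?thesis using assms by (simp add: pmf_stepU split: if_splits)
next
  case False
  then have "{i \<in> ripple m G V. V - {the_elem (G i \<inter> V)} = W} \<noteq> {}"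
    using assms by (auto simp: pmf_stepU)
  then obtain i where "i \<in> ripple m G V" "V - {the_elem (G i \<inter> V)} = W" by auto
  then show ?thesis using False ripple_elem(2)[of i m G V] by auto
qed

lemma pmf_sum_bind:
  assumes "finite A" "set_pmf p \<subseteq> A"
  shows "pmf (bind_pmf p f) y = (\<Sum>x\<in>A. pmf p x * pmf (f x) y)"
  unfolding pmf_bind using assms
  by (subst integral_measure_pmf_real[of A]) (auto simp: mult.commute)

lemma pmf_decU_Suc:
  "pmf (decU n m G (Suc k)) W = (\<Sum>V\<in>Pow {..<n}. pmf (decU n m G k) V * pmf (stepU m G V) W)"
  by (simp add: pmf_sum_bind[OF _ set_decU])

lemma decU_inv:
  fixes G :: "nat \<Rightarrow> nat set" and S' :: "nat set"
  assumes "finite U" and jm: "j < m"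
    and "(2 \<le> card (G j \<inter> U) \<and> 2 \<le> card (S' \<inter> U)) \<or>
         (card (G j \<inter> U) = 1 \<and> card (S' \<inter> U) = 1 \<and> G j - U = S' - U)"
  shows "pmf (decU n m G k) U = pmf (decU n m (G(j:=S')) k) U"
  using assms(1,3)
proof (induction k arbitrary: U)
  case 0
  show ?case by simp
next
  case (Suc k U)
  define G' where "G' = G(j:=S')"
  have "pmf (decU n m G k) V * pmf (stepU m G V) U = pmf (decU n m G' k) V * pmf (stepU m G' V) U"
    if V: "V \<in> Pow {..<n}" for V
  proof -
    have fV: "finite V" using V finite_subset by auto
    show ?thesis
    proof (cases "V = U")
      case True
      from Suc.prems(2) show ?thesis
      proof
        assume A: "2 \<le> card (G j \<inter> U) \<and> 2 \<le> card (S' \<inter> U)"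
        have r: "ripple m G V = ripple m G' V" using A True by (auto simp: ripple_def G'_def)
        have "stepU m G V = stepU m G' V"
          by (rule stepU_same[OF r]) (use A True in \<open>auto simp: G'_def ripple_def\<close>)
        with Suc.IH[OF Suc.prems(1) Suc.prems(2)] True show ?thesis unfolding G'_def by metis
      next
        assume B: "card (G j \<inter> U) = 1 \<and> card (S' \<inter> U) = 1 \<and> G j - U = S' - U"
        have "j \<in> ripple m G V" "j \<in> ripple m G' V" using B True jm by (auto simp: ripple_def G'_def)
        then have "pmf (stepU m G V) U = 0" "pmf (stepU m G' V) U = 0"
          using pmf_stepU_nz[of m G V U] pmf_stepU_nz[of m G' V U] True by auto
        then show ?thesis by simp
      qed
    next
      case False
      show ?thesis
      proof (cases "pmf (stepU m G V) U = 0 \<and> pmf (stepU m G' V) U = 0")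
        case True
        then show ?thesis by simp
      next
        case False2: False
        then obtain x where x: "x \<in> V" "U = V - {x}"
          using pmf_stepU_nz[of m G V U] pmf_stepU_nz[of m G' V U] False by blast
        then have Vx: "V = insert x U" "x \<notin> U" by auto
        have key: "(2 \<le> card (G j \<inter> V) \<and> 2 \<le> card (S' \<inter> V)) \<or>
           (card (G j \<inter> V) = 1 \<and> card (S' \<inter> V) = 1 \<and> G j - V = S' - V \<and> x \<notin> G j \<and> x \<notin> S')"
          using Suc.prems(2)
        proof
          assume A: "2 \<le> card (G j \<inter> U) \<and> 2 \<le> card (S' \<inter> U)"
          have "card (G j \<inter> U) \<le> card (G j \<inter> V)" "card (S' \<inter> U) \<le> card (S' \<inter> V)"
            using fV Vx by (auto intro!: card_mono)
          with A show ?thesis by auto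
        next
          assume B: "card (G j \<inter> U) = 1 \<and> card (S' \<inter> U) = 1 \<and> G j - U = S' - U"
          show ?thesis
          proof (cases "x \<in> G j")
            case True
            then have xS: "x \<in> S'" using B Vx by blast
            have "G j \<inter> V = insert x (G j \<inter> U)" "S' \<inter> V = insert x (S' \<inter> U)"
              using True xS Vx by auto
            moreover have "finite (G j \<inter> U)" "finite (S' \<inter> U)" using Suc.prems(1) by auto
            ultimately have "card (G j \<inter> V) = 2" "card (S' \<inter> V) = 2" using B Vx by auto
            then show ?thesis by simp
          next
            case False
            then have xS: "x \<notin> S'" using B Vx by blast
            have "G j \<inter> V = G j \<inter> U" "S' \<inter> V = S' \<inter> U" "G j - V = S' - V"
              using False xS Vx B by auto
            then show ?thesis using B False xS by auto
          qed
        qed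
        have IH: "pmf (decU n m G k) V = pmf (decU n m G' k) V"
          unfolding G'_def by (rule Suc.IH[OF fV]) (use key in auto)
        have st: "pmf (stepU m G V) U = pmf (stepU m G' V) U"
          using key
        proof
          assume A: "2 \<le> card (G j \<inter> V) \<and> 2 \<le> card (S' \<inter> V)"
          have r: "ripple m G V = ripple m G' V" using A by (auto simp: ripple_def G'_def)
          have "stepU m G V = stepU m G' V"
            by (rule stepU_same[OF r]) (use A in \<open>auto simp: G'_def ripple_def\<close>)
          then show ?thesis by simp
        next
          assume B: "card (G j \<inter> V) = 1 \<and> card (S' \<inter> V) = 1 \<and> G j - V = S' - V \<and> x \<notin> G j \<and> x \<notin> S'"
          have r: "ripple m G V = ripple m G' V" using B by (auto simp: ripple_def G'_def)
          have "{i \<in> ripple m G V. V - {the_elem (G i \<inter> V)} = U} =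
                {i \<in> ripple m G' V. V - {the_elem (G' i \<inter> V)} = U}"
          proof -
            have "(V - {the_elem (G i \<inter> V)} = U) = (V - {the_elem (G' i \<inter> V)} = U)"
              if i: "i \<in> ripple m G V" for i
            proof (cases "i = j")
              case True
              have i': "i \<in> ripple m G' V" using i r by simp
              have e1: "the_elem (G i \<inter> V) \<in> V" "the_elem (G i \<inter> V) \<in> G i"
                using ripple_elem[OF i] by auto
              have e2: "the_elem (G' i \<inter> V) \<in> V" "the_elem (G' i \<inter> V) \<in> G' i"
                using ripple_elem[OF i'] by auto
              have "the_elem (G i \<inter> V) \<noteq> x" "the_elem (G' i \<inter> V) \<noteq> x"
                using e1 e2 B True by (auto simp: G'_def)
              then have "V - {the_elem (G i \<inter> V)} \<noteq> U" "V - {the_elem (G' i \<inter> V)} \<noteq> U"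
                using e1(1) e2(1) x by auto
              then show ?thesis by simp
            next
              case False
              then show ?thesis by (simp add: G'_def)
            qed
            then show ?thesis using r by auto
          qed
          then show ?thesis using r by (simp add: pmf_stepU)
        qed
        show ?thesis using IH st by simp
      qed
    qed
  qed
  then show ?case unfolding pmf_decU_Suc G'_def by (intro sum.cong) auto
qed

definition keyU :: "nat set \<Rightarrow> nat set \<Rightarrow> nat \<times> nat set" where
  "keyU U S = (if 2 \<le> card (S \<inter> U) then (2, {}) else (card (S \<inter> U), S - U))"

lemma keyU_cases:
  assumes "finite U" "keyU U S = keyU U S'"
  shows "(2 \<le> card (S \<inter> U) \<and> 2 \<le> card (S' \<inter> U)) \<or>
         (card (S \<inter> U) = 1 \<and> card (S' \<inter> U) = 1 \<and> S - U = S' - U) \<or> S = S'"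
proof (cases "2 \<le> card (S \<inter> U)")
  case True
  then show ?thesis using assms by (auto simp: keyU_def split: if_splits)
next
  case False
  then have c: "card (S \<inter> U) = card (S' \<inter> U)" "S - U = S' - U" "card (S' \<inter> U) < 2"
    using assms by (auto simp: keyU_def split: if_splits)
  show ?thesis
  proof (cases "card (S \<inter> U) = 1")
    case True then show ?thesis using c by auto
  next
    case False
    then have "card (S \<inter> U) = 0" "card (S' \<inter> U) = 0" using c by auto
    then have "S \<inter> U = {}" "S' \<inter> U = {}" using assms(1) by auto
    then have "S = S'" using c(2) by blast
    then show ?thesis by simp
  qed
qed

lemma decU_key:
  assumes "finite U" "\<And>j. j < m \<Longrightarrow> keyU U (G j) = keyU U (G' j)"
  shows "pmf (decU n m G k) U = pmf (decU n m G' k) U"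
proof -
  define H where "H i = (\<lambda>j. if j < i then G' j else G j)" for i
  have "i \<le> m \<Longrightarrow> pmf (decU n m G k) U = pmf (decU n m (H i) k) U" for i
  proof (induction i)
    case 0
    have "H 0 = G" by (auto simp: H_def)
    then show ?case by simp
  next
    case (Suc i)
    have HS: "H (Suc i) = (H i)(i := G' i)" by (auto simp: H_def fun_eq_iff)
    have Hi: "H i i = G i" by (simp add: H_def)
    have im: "i < m" using Suc by simp
    from keyU_cases[OF assms(1) assms(2)[OF im]]
    have "pmf (decU n m (H i) k) U = pmf (decU n m (H (Suc i)) k) U"
    proof (elim disjE)
      assume "G i = G' i"
      then have "H (Suc i) = H i" using HS Hi by (metis fun_upd_triv)
      then show ?thesis by simp
    qed (unfold HS, (rule decU_inv[OF assms(1) im]; use Hi in auto)+)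
    with Suc show ?case by simp
  qed
  from this[of m] have "pmf (decU n m G k) U = pmf (decU n m (H m) k) U" by simp
  also have "decU n m (H m) k = decU n m G' k" by (rule decU_dep) (simp add: H_def)
  finally show ?thesis .
qed

lemma measure_sum_fin:
  assumes "finite A" "set_pmf p \<subseteq> A"
  shows "measure_pmf.prob p E = (\<Sum>x\<in>A. pmf p x * indicator E x)"
proof -
  have "measure_pmf.prob p E = measure_pmf.prob p (A \<inter> E)"
    using assms by (intro measure_prob_cong_0) (auto simp: set_pmf_eq)
  also have "\<dots> = sum (pmf p) (A \<inter> E)"
    using assms by (simp add: measure_measure_pmf_finite)
  also have "\<dots> = (\<Sum>x\<in>A. pmf p x * indicator E x)"
    using assms by (simp add: sum.inter_restrict indicator_def if_distrib cong: if_cong)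
  finally show ?thesis .
qed

lemma measure_bind_fin:
  assumes "finite A" "set_pmf p \<subseteq> A"
  shows "measure_pmf.prob (bind_pmf p f) E = (\<Sum>x\<in>A. pmf p x * measure_pmf.prob (f x) E)"
proof -
  have "ennreal (measure_pmf.prob (bind_pmf p f) E) = emeasure (bind_pmf p f) E"
    by (simp add: measure_pmf.emeasure_eq_measure)
  also have "\<dots> = (\<integral>\<^sup>+x. emeasure (f x) E \<partial>measure_pmf p)"
    by simp
  also have "\<dots> = (\<Sum>x\<in>A. emeasure (f x) E * pmf p x)"
    using assms by (intro nn_integral_measure_pmf_support) (auto simp: set_pmf_eq)
  also have "\<dots> = (\<Sum>x\<in>A. ennreal (pmf p x * measure_pmf.prob (f x) E))"
    by (intro sum.cong refl) (simp add: measure_pmf.emeasure_eq_measure ennreal_mult' mult.commute)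
  also have "\<dots> = ennreal (\<Sum>x\<in>A. pmf p x * measure_pmf.prob (f x) E)"
    by (intro sum_ennreal) auto
  finally show ?thesis
    by (subst (asm) ennreal_inj) (auto intro!: sum_nonneg)
qed

lemma measure_pair_fin:
  assumes "finite A" "set_pmf p \<subseteq> A"
  shows "measure_pmf.prob (pair_pmf p q) E = (\<Sum>x\<in>A. pmf p x * measure_pmf.prob q {y. (x, y) \<in> E})"
proof -
  have "pair_pmf p q = bind_pmf p (\<lambda>x. map_pmf (Pair x) q)"
    by (simp add: pair_pmf_def map_pmf_def)
  moreover have "Pair x -` E = {y. (x, y) \<in> E}" for x by auto
  moreover have "measure_pmf.prob (bind_pmf p (\<lambda>x. map_pmf (Pair x) q)) E =
     (\<Sum>x\<in>A. pmf p x * measure_pmf.prob (map_pmf (Pair x) q) E)"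
    by (rule measure_bind_fin[OF assms])
  ultimately show ?thesis by (simp only: measure_map_pmf)
qed

lemma card_Sd: "card {S. S \<subseteq> {..<n::nat} \<and> card S = d} = n choose d"
  using n_subsets[of "{..<n}" d] by simp

lemma pmf_slot:
  assumes "set_pmf \<Omega> \<subseteq> {..n}"
  shows "pmf (slot_pmf n \<Omega>) S =
    (if S \<subseteq> {..<n} then pmf \<Omega> (card S) / real (n choose card S) else 0)"
proof -
  have "pmf (slot_pmf n \<Omega>) S =
     (\<Sum>d\<in>{..n}. pmf \<Omega> d * pmf (pmf_of_set {S. S \<subseteq> {..<n} \<and> card S = d}) S)"
    unfolding slot_pmf_def using assms by (intro pmf_sum_bind) auto
  also have "\<dots> = (\<Sum>d\<in>{..n}. if d = card S then
       (if S \<subseteq> {..<n} then pmf \<Omega> d / real (n choose d) else 0) else 0)"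
  proof (intro sum.cong refl)
    fix d assume d: "d \<in> {..n}"
    then have "pmf (pmf_of_set {S. S \<subseteq> {..<n} \<and> card S = d}) S =
          indicator {S. S \<subseteq> {..<n} \<and> card S = d} S / real (n choose d)"
      using Sd_finite[of n d] Sd_ne[of d n] card_Sd[of n d] by simp
    then show "pmf \<Omega> d * pmf (pmf_of_set {S. S \<subseteq> {..<n} \<and> card S = d}) S =
       (if d = card S then (if S \<subseteq> {..<n} then pmf \<Omega> d / real (n choose d) else 0) else 0)"
      by (auto simp: indicator_def)
  qed
  also have "\<dots> = (if S \<subseteq> {..<n} then pmf \<Omega> (card S) / real (n choose card S) else 0)"
  proof (cases "S \<subseteq> {..<n}")
    case True
    then have "card S \<le> n" using card_mono[of "{..<n}" S] by auto
    then show ?thesis using True by (simp add: sum.delta')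
  qed simp
  finally show ?thesis .
qed

lemma measure_slot:
  assumes "set_pmf \<Omega> \<subseteq> {..n}"
  shows "measure_pmf.prob (slot_pmf n \<Omega>) E =
    (\<Sum>d\<in>{..n}. pmf \<Omega> d * real (card (E \<inter> {S. S \<subseteq> {..<n} \<and> card S = d})) / real (n choose d))"
proof -
  have "measure_pmf.prob (slot_pmf n \<Omega>) E =
     (\<Sum>d\<in>{..n}. pmf \<Omega> d * measure_pmf.prob (pmf_of_set {S. S \<subseteq> {..<n} \<and> card S = d}) E)"
    unfolding slot_pmf_def using assms by (intro measure_bind_fin) auto
  also have "\<dots> = (\<Sum>d\<in>{..n}. pmf \<Omega> d * real (card (E \<inter> {S. S \<subseteq> {..<n} \<and> card S = d})) / real (n choose d))"
  proof (intro sum.cong refl)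
    fix d assume d: "d \<in> {..n}"
    then show "pmf \<Omega> d * measure_pmf.prob (pmf_of_set {S. S \<subseteq> {..<n} \<and> card S = d}) E =
          pmf \<Omega> d * real (card (E \<inter> {S. S \<subseteq> {..<n} \<and> card S = d})) / real (n choose d)"
      using Sd_finite[of n d] Sd_ne[of d n] card_Sd[of n d]
      by (simp add: measure_pmf_of_set Int_commute)
  qed
  finally show ?thesis .
qed

lemma count_split:
  assumes "finite X" "finite Y" "X \<inter> Y = {}"
  shows "card {S. S \<subseteq> X \<union> Y \<and> card (S \<inter> X) = i \<and> card (S \<inter> Y) = j} =
         (card X choose i) * (card Y choose j)"
proof -
  let ?PA = "{A. A \<subseteq> X \<and> card A = i}" and ?PB = "{B. B \<subseteq> Y \<and> card B = j}"
  have eq: "{S. S \<subseteq> X \<union> Y \<and> card (S \<inter> X) = i \<and> card (S \<inter> Y) = j} = (\<lambda>(A, B). A \<union> B) ` (?PA \<times> ?PB)"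
  proof (intro equalityI subsetI)
    fix S assume S: "S \<in> {S. S \<subseteq> X \<union> Y \<and> card (S \<inter> X) = i \<and> card (S \<inter> Y) = j}"
    then have "S = (S \<inter> X) \<union> (S \<inter> Y)" by auto
    with S show "S \<in> (\<lambda>(A, B). A \<union> B) ` (?PA \<times> ?PB)"
      by (intro image_eqI[of _ _ "(S \<inter> X, S \<inter> Y)"]) auto
  next
    fix S assume "S \<in> (\<lambda>(A, B). A \<union> B) ` (?PA \<times> ?PB)"
    then obtain A B where AB: "S = A \<union> B" "A \<subseteq> X" "card A = i" "B \<subseteq> Y" "card B = j" by auto
    have "S \<inter> X = A" "S \<inter> Y = B" using AB assms(3) by auto
    with AB show "S \<in> {S. S \<subseteq> X \<union> Y \<and> card (S \<inter> X) = i \<and> card (S \<inter> Y) = j}" by auto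
  qed
  have inj: "inj_on (\<lambda>(A, B). A \<union> B) (?PA \<times> ?PB)"
  proof (rule inj_onI, clarify)
    fix A B A' B' assume "A \<subseteq> X" "B \<subseteq> Y" "A' \<subseteq> X" "B' \<subseteq> Y" "A \<union> B = A' \<union> B'"
    then show "A = A' \<and> B = B'" using assms(3) by blast
  qed
  show ?thesis
    unfolding eq using card_image[OF inj] n_subsets[OF assms(1), of i] n_subsets[OF assms(2), of j]
    by (simp add: card_cartesian_product)
qed

context
  fixes n u :: nat and U :: "nat set"
  assumes U: "U \<subseteq> {..<n}" "card U = u"
begin

lemma finU: "finite U" using U finite_subset by blast

lemma cardY: "card ({..<n} - U) = n - u"
  using U finU by (simp add: card_Diff_subset)

lemma card_S_split:
  assumes "S \<subseteq> {..<n}"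
  shows "card S = card (S \<inter> U) + card (S \<inter> ({..<n} - U))"
proof -
  have "S = (S \<inter> U) \<union> (S \<inter> ({..<n} - U))" using assms by auto
  moreover have "finite S" using assms finite_subset by blast
  ultimately have "card S = card ((S \<inter> U) \<union> (S \<inter> ({..<n} - U)))" by simp
  also have "\<dots> = card (S \<inter> U) + card (S \<inter> ({..<n} - U))"
    using \<open>finite S\<close> by (intro card_Un_disjoint) auto
  finally show ?thesis .
qed

lemma count_i:
  assumes "i \<le> d"
  shows "card ({S. card (S \<inter> U) = i} \<inter> {S. S \<subseteq> {..<n} \<and> card S = d}) = (u choose i) * ((n - u) choose (d - i))"
proof -
  have "{S. card (S \<inter> U) = i} \<inter> {S. S \<subseteq> {..<n} \<and> card S = d} =
        {S. S \<subseteq> U \<union> ({..<n} - U) \<and> card (S \<inter> U) = i \<and> card (S \<inter> ({..<n} - U)) = d - i}"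
  proof (intro equalityI subsetI)
    fix S assume S: "S \<in> {S. card (S \<inter> U) = i} \<inter> {S. S \<subseteq> {..<n} \<and> card S = d}"
    then have "S \<subseteq> {..<n}" by auto
    from card_S_split[OF this] S U(1) show "S \<in> {S. S \<subseteq> U \<union> ({..<n} - U) \<and> card (S \<inter> U) = i \<and> card (S \<inter> ({..<n} - U)) = d - i}"
      by auto
  next
    fix S assume S: "S \<in> {S. S \<subseteq> U \<union> ({..<n} - U) \<and> card (S \<inter> U) = i \<and> card (S \<inter> ({..<n} - U)) = d - i}"
    then have Sn: "S \<subseteq> {..<n}" using U(1) by auto
    from card_S_split[OF this] S assms show "S \<in> {S. card (S \<inter> U) = i} \<inter> {S. S \<subseteq> {..<n} \<and> card S = d}"
      using Sn by auto
  qed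
  also have "card \<dots> = (u choose i) * ((n - u) choose (d - i))"
    using count_split[of U "{..<n} - U" i "d - i"] finU U cardY by auto
  finally show ?thesis .
qed

lemma count_0: "card ({S. card (S \<inter> U) = 0} \<inter> {S. S \<subseteq> {..<n} \<and> card S = d}) = (n - u) choose d"
  using count_i[of 0 d] by simp

lemma count_1: "card ({S. card (S \<inter> U) = 1} \<inter> {S. S \<subseteq> {..<n} \<and> card S = d}) =
   (if 1 \<le> d then u * ((n - u) choose (d - 1)) else 0)"
proof (cases "1 \<le> d")
  case True
  have "card ({S. card (S \<inter> U) = 1} \<inter> {S. S \<subseteq> {..<n} \<and> card S = d}) = (u choose 1) * ((n - u) choose (d - 1))"
    by (rule count_i[OF True])
  then show ?thesis using True by simp
next
  case False
  then have d0: "d = 0" by simp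
  have h: "S = {}" if "S \<subseteq> {..<n}" "card S = 0" for S
    using that by (metis card_0_eq finite_lessThan finite_subset)
  have "{S. card (S \<inter> U) = 1} \<inter> {S. S \<subseteq> {..<n} \<and> card S = 0} = {}"
  proof (rule equals0I)
    fix S assume "S \<in> {S. card (S \<inter> U) = 1} \<inter> {S. S \<subseteq> {..<n} \<and> card S = 0}"
    then have "S = {}" "card (S \<inter> U) = 1" using h by auto
    then show False by simp
  qed
  then show ?thesis using d0 by simp
qed

lemma count_A:
  assumes x: "x \<in> U"
  shows "card ({S. card (S \<inter> U) = 2 \<and> x \<in> S} \<inter> {S. S \<subseteq> {..<n} \<and> card S = d}) =
   (if 2 \<le> d then (u - 1) * ((n - u) choose (d - 2)) else 0)"
proof -
  let ?U' = "U - {x}" and ?Y = "{..<n} - U"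
  let ?M = "{S. S \<subseteq> ?U' \<union> ?Y \<and> card (S \<inter> ?U') = 1 \<and> card (S \<inter> ?Y) = d - 2}"
  have fU': "finite ?U'" using finU by auto
  have cU': "card ?U' = u - 1" using x U finU by auto
  show ?thesis
  proof (cases "2 \<le> d")
    case True
    have eq: "{S. card (S \<inter> U) = 2 \<and> x \<in> S} \<inter> {S. S \<subseteq> {..<n} \<and> card S = d} = insert x ` ?M"
    proof (intro equalityI subsetI)
      fix S assume S: "S \<in> {S. card (S \<inter> U) = 2 \<and> x \<in> S} \<inter> {S. S \<subseteq> {..<n} \<and> card S = d}"
      then have S1: "S \<subseteq> {..<n}" "card S = d" "card (S \<inter> U) = 2" "x \<in> S" by auto
      have fS: "finite S" using S1 finite_subset by blast
      have a: "(S - {x}) \<inter> ?U' = (S \<inter> U) - {x}" by auto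
      have "card ((S \<inter> U) - {x}) = 1" using S1 x fS by auto
      moreover have "(S - {x}) \<inter> ?Y = S \<inter> ?Y" using x by auto
      moreover have "card (S \<inter> ?Y) = d - 2" using card_S_split[OF S1(1)] S1 by auto
      ultimately have "S - {x} \<in> ?M" using S1 a x by auto
      moreover have "S = insert x (S - {x})" using S1 by auto
      ultimately show "S \<in> insert x ` ?M" by blast
    next
      fix S assume "S \<in> insert x ` ?M"
      then obtain T where T: "S = insert x T" "T \<subseteq> ?U' \<union> ?Y" "card (T \<inter> ?U') = 1" "card (T \<inter> ?Y) = d - 2"
        by auto
      have xT: "x \<notin> T" using T x by auto
      have "T \<subseteq> {..<n}" using T(2) U(1) by auto
      then have fT: "finite T" using finite_subset by blast
      have "S \<inter> U = insert x (T \<inter> ?U')" using T x by auto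
      then have c2: "card (S \<inter> U) = 2" using T(3) fT xT by simp
      have Sn: "S \<subseteq> {..<n}" using T x U by auto
      have "S \<inter> ?Y = T \<inter> ?Y" using T x by auto
      then have "card S = d" using card_S_split[OF Sn] c2 T(4) True by simp
      then show "S \<in> {S. card (S \<inter> U) = 2 \<and> x \<in> S} \<inter> {S. S \<subseteq> {..<n} \<and> card S = d}"
        using c2 Sn T by auto
    qed
    have inj: "inj_on (insert x) ?M"
    proof (rule inj_onI)
      fix A B assume AB: "A \<in> ?M" "B \<in> ?M" "insert x A = insert x B"
      then have "x \<notin> A" "x \<notin> B" using x by auto
      with AB(3) show "A = B" by (metis insert_ident)
    qed
    have "card ?M = ((u - 1) choose 1) * ((n - u) choose (d - 2))"
      using count_split[OF fU', of ?Y 1 "d - 2"] cU' cardY by auto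
    then have cM: "card ?M = (u - 1) * ((n - u) choose (d - 2))" by (simp only: choose_one)
    have "card ({S. card (S \<inter> U) = 2 \<and> x \<in> S} \<inter> {S. S \<subseteq> {..<n} \<and> card S = d}) = card (insert x ` ?M)"
      by (simp only: eq)
    also have "\<dots> = card ?M" by (rule card_image[OF inj])
    finally have cc: "card ({S. card (S \<inter> U) = 2 \<and> x \<in> S} \<inter> {S. S \<subseteq> {..<n} \<and> card S = d}) = card ?M" .
    have ii: "(if 2 \<le> d then (u - 1) * ((n - u) choose (d - 2)) else 0) = (u - 1) * ((n - u) choose (d - 2))"
      using True by (rule if_P)
    show ?thesis unfolding ii cc cM ..
  next
    case False
    have "card S \<ge> 2" if "card (S \<inter> U) = 2" "S \<subseteq> {..<n}" for S
      using that card_S_split[of S] by simp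
    then have "{S. card (S \<inter> U) = 2 \<and> x \<in> S} \<inter> {S. S \<subseteq> {..<n} \<and> card S = d} = {}"
      using False by fastforce
    then show ?thesis using False by simp
  qed
qed

end

lemma choose_id:
  assumes "2 \<le> d" "d \<le> n"
  shows "(n choose d) * d * (d - 1) = n * (n - 1) * ((n - 2) choose (d - 2))"
proof -
  obtain k where k: "d = Suc (Suc k)" using assms(1) by (metis add_2_eq_Suc le_Suc_ex)
  obtain n' where n': "n = Suc (Suc n')" using assms by (metis add_2_eq_Suc le_Suc_ex le_trans)
  have a1: "Suc (Suc k) * (n choose Suc (Suc k)) = n * ((n - 1) choose Suc k)"
    by (rule binomial_absorption)
  have a2: "Suc k * ((n - 1) choose Suc k) = (n - 1) * ((n - 1 - 1) choose k)"
    by (rule binomial_absorption)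
  have "(n choose d) * d * (d - 1) = (Suc (Suc k) * (n choose Suc (Suc k))) * Suc k"
    using k by (simp add: mult.commute mult.left_commute)
  also have "\<dots> = n * (Suc k * ((n - 1) choose Suc k))" using a1 by (simp add: mult.commute mult.left_commute)
  also have "\<dots> = n * ((n - 1) * ((n - 1 - 1) choose k))" using a2 by simp
  also have "\<dots> = n * (n - 1) * ((n - 2) choose (d - 2))"
  proof -
    have "n - 1 - 1 = n - 2" "d - 2 = k" using k by auto
    then show ?thesis by (simp only: mult.assoc)
  qed
  finally show ?thesis .
qed

context
  fixes n u :: nat and U :: "nat set" and \<Omega> :: "nat pmf"
  assumes U: "U \<subseteq> {..<n}" "card U = u" and u1: "1 \<le> u" and deg: "set_pmf \<Omega> \<subseteq> {..n}"
begin

lemma u_le_n: "u \<le> n"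
  using U card_mono[of "{..<n}" U] by auto

lemma choose_pos: "d \<le> n \<Longrightarrow> real (n choose d) > 0"
  by simp

lemma numer_eq:
  assumes x: "x \<in> U"
  shows "measure_pmf.prob (slot_pmf n \<Omega>) {S. card (S \<inter> U) = 2 \<and> x \<in> S} =
    (\<Sum>d = 2..n - u + 2. pmf \<Omega> d * real d * (real d - 1) * (1 / real n)
        * ((real u - 1) / (real n - 1))
        * (real ((n - u) choose (d - 2)) / real ((n - 2) choose (d - 2))))"
proof -
  have L: "measure_pmf.prob (slot_pmf n \<Omega>) {S. card (S \<inter> U) = 2 \<and> x \<in> S} =
     (\<Sum>d\<in>{..n}. pmf \<Omega> d * real (if 2 \<le> d then (u - 1) * ((n - u) choose (d - 2)) else 0) / real (n choose d))"
    by (simp only: measure_slot[OF deg] count_A[OF U x])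
  show ?thesis
  proof (cases "u = 1")
    case True
    then have h1: "u - 1 = 0" and h2: "real u - 1 = 0" by simp_all
    have l: "(\<Sum>d\<in>{..n}. pmf \<Omega> d * real (if 2 \<le> d then (u - 1) * ((n - u) choose (d - 2)) else 0) / real (n choose d)) = 0"
      by (rule sum.neutral) (simp add: True)
    have r: "(\<Sum>d = 2..n - u + 2. pmf \<Omega> d * real d * (real d - 1) * (1 / real n)
        * ((real u - 1) / (real n - 1))
        * (real ((n - u) choose (d - 2)) / real ((n - 2) choose (d - 2)))) = 0"
      by (rule sum.neutral) (simp add: h2)
    show ?thesis unfolding L l r ..
  next
    case False
    then have u2: "2 \<le> u" using u1 by simp
    then have n2: "2 \<le> n" using u_le_n by simp
    have "(\<Sum>d\<in>{..n}. pmf \<Omega> d * real (if 2 \<le> d then (u - 1) * ((n - u) choose (d - 2)) else 0) / real (n choose d))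
        = (\<Sum>d\<in>{2..n}. pmf \<Omega> d * real (if 2 \<le> d then (u - 1) * ((n - u) choose (d - 2)) else 0) / real (n choose d))"
      by (intro sum.mono_neutral_right) auto
    also have "\<dots> = (\<Sum>d\<in>{2..n}. pmf \<Omega> d * real d * (real d - 1) * (1 / real n)
        * ((real u - 1) / (real n - 1))
        * (real ((n - u) choose (d - 2)) / real ((n - 2) choose (d - 2))))"
    proof (intro sum.cong refl)
      fix d assume d: "d \<in> {2..n}"
      have ci: "real (n choose d) * real d * (real d - 1) = real n * (real n - 1) * real ((n - 2) choose (d - 2))"
      proof -
        have E: "(n choose d) * d * (d - 1) = n * (n - 1) * ((n - 2) choose (d - 2))"
          using choose_id[of d n] d by auto
        have "real ((n choose d) * d * (d - 1)) = real (n * (n - 1) * ((n - 2) choose (d - 2)))"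
          using E by (simp only:)
        then show ?thesis using d n2 by (simp add: of_nat_diff)
      qed
      have p1: "real (n choose d) > 0" using d by simp
      have p2: "real ((n - 2) choose (d - 2)) > 0" using d by auto
      have p3: "real n - 1 > 0" using n2 by simp
      have nz: "real (n choose d) \<noteq> 0" "real ((n - 2) choose (d - 2)) \<noteq> 0" "real n \<noteq> 0" "real n - 1 \<noteq> 0"
        "real d \<noteq> 0" "real d - 1 \<noteq> 0"
        using p1 p2 p3 d by auto
      define w where "w = pmf \<Omega> d"
      define A where "A = real (n choose d)"
      define B where "B = real ((n - 2) choose (d - 2))"
      define K where "K = real ((n - u) choose (d - 2))"
      have ci': "A * real d * (real d - 1) = real n * (real n - 1) * B" using ci by (simp add: A_def B_def)
      have lhs: "pmf \<Omega> d * real (if 2 \<le> d then (u - 1) * ((n - u) choose (d - 2)) else 0) / real (n choose d)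
           = w * ((real u - 1) * K) / A"
        using d u1 by (simp add: w_def K_def A_def of_nat_diff)
      have "pmf \<Omega> d * real d * (real d - 1) * (1 / real n) * ((real u - 1) / (real n - 1))
          * (real ((n - u) choose (d - 2)) / real ((n - 2) choose (d - 2)))
          = w * (real u - 1) * K * (real d * (real d - 1)) / (real n * (real n - 1) * B)"
        using nz by (simp add: w_def K_def B_def field_simps)
      also have "\<dots> = w * (real u - 1) * K * (real d * (real d - 1)) / (A * real d * (real d - 1))"
        by (simp only: ci')
      also have "\<dots> = w * ((real u - 1) * K) / A"
        using nz by (simp add: A_def field_simps)
      finally show "pmf \<Omega> d * real (if 2 \<le> d then (u - 1) * ((n - u) choose (d - 2)) else 0) / real (n choose d) =
          pmf \<Omega> d * real d * (real d - 1) * (1 / real n) * ((real u - 1) / (real n - 1))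
          * (real ((n - u) choose (d - 2)) / real ((n - 2) choose (d - 2)))"
        using lhs by simp
    qed
    also have "\<dots> = (\<Sum>d = 2..n - u + 2. pmf \<Omega> d * real d * (real d - 1) * (1 / real n)
        * ((real u - 1) / (real n - 1))
        * (real ((n - u) choose (d - 2)) / real ((n - 2) choose (d - 2))))"
      using u2 u_le_n by (intro sum.mono_neutral_right) auto
    finally show ?thesis unfolding L .
  qed
qed

lemma denom_eq:
  "measure_pmf.prob (slot_pmf n \<Omega>) {S. 2 \<le> card (S \<inter> U)} =
    1 - (\<Sum>d = 1..n - u + 1. pmf \<Omega> d * real u * (real ((n - u) choose (d - 1)) / real (n choose d)))
      - (\<Sum>d = 0..n - u. pmf \<Omega> d * (real ((n - u) choose d) / real (n choose d)))"
proof -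
  let ?p = "slot_pmf n \<Omega>"
  have part: "{S. 2 \<le> card (S \<inter> U)} = - ({S. card (S \<inter> U) = 1} \<union> {S. card (S \<inter> U) = 0})"
    by auto
  have "measure_pmf.prob ?p {S. 2 \<le> card (S \<inter> U)} =
      1 - measure_pmf.prob ?p ({S. card (S \<inter> U) = 1} \<union> {S. card (S \<inter> U) = 0})"
  proof -
    have "- ({S. card (S \<inter> U) = 1} \<union> {S. card (S \<inter> U) = 0}) =
        space (measure_pmf ?p) - ({S. card (S \<inter> U) = 1} \<union> {S. card (S \<inter> U) = 0})" by auto
    then show ?thesis unfolding part by (simp only: measure_pmf.prob_compl sets_measure_pmf UNIV_I)
  qed
  also have "measure_pmf.prob ?p ({S. card (S \<inter> U) = 1} \<union> {S. card (S \<inter> U) = 0}) =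
      measure_pmf.prob ?p {S. card (S \<inter> U) = 1} + measure_pmf.prob ?p {S. card (S \<inter> U) = 0}"
    by (rule measure_pmf.finite_measure_Union) auto
  also have "measure_pmf.prob ?p {S. card (S \<inter> U) = 1} =
     (\<Sum>d\<in>{..n}. pmf \<Omega> d * real (if 1 \<le> d then u * ((n - u) choose (d - 1)) else 0) / real (n choose d))"
    by (simp only: measure_slot[OF deg] count_1[OF U])
  also have "\<dots> = (\<Sum>d = 1..n - u + 1. pmf \<Omega> d * real u * (real ((n - u) choose (d - 1)) / real (n choose d)))"
  proof -
    have "(\<Sum>d\<in>{..n}. pmf \<Omega> d * real (if 1 \<le> d then u * ((n - u) choose (d - 1)) else 0) / real (n choose d))
       = (\<Sum>d\<in>{1..n}. pmf \<Omega> d * real (if 1 \<le> d then u * ((n - u) choose (d - 1)) else 0) / real (n choose d))"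
      by (intro sum.mono_neutral_right) auto
    also have "\<dots> = (\<Sum>d\<in>{1..n}. pmf \<Omega> d * real u * (real ((n - u) choose (d - 1)) / real (n choose d)))"
      by (intro sum.cong refl) auto
    also have "\<dots> = (\<Sum>d = 1..n - u + 1. pmf \<Omega> d * real u * (real ((n - u) choose (d - 1)) / real (n choose d)))"
      using u1 u_le_n by (intro sum.mono_neutral_right) auto
    finally show ?thesis .
  qed
  also have "measure_pmf.prob ?p {S. card (S \<inter> U) = 0} =
     (\<Sum>d\<in>{..n}. pmf \<Omega> d * real ((n - u) choose d) / real (n choose d))"
    by (simp only: measure_slot[OF deg] count_0[OF U])
  also have "\<dots> = (\<Sum>d\<in>{..n}. pmf \<Omega> d * (real ((n - u) choose d) / real (n choose d)))"
    by simp
  also have "\<dots> = (\<Sum>d = 0..n - u. pmf \<Omega> d * (real ((n - u) choose d) / real (n choose d)))"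
    by (intro sum.mono_neutral_right) auto
  finally show ?thesis by simp
qed

end

lemma map_bool_bernoulli:
  "map_pmf P p = bernoulli_pmf (measure_pmf.prob p {z. P z})"
proof (rule pmf_eqI)
  fix b :: bool
  have le: "0 \<le> measure_pmf.prob p {z. P z}" "measure_pmf.prob p {z. P z} \<le> 1" by auto
  show "pmf (map_pmf P p) b = pmf (bernoulli_pmf (measure_pmf.prob p {z. P z})) b"
  proof (cases b)
    case True
    have "P -` {True} = {z. P z}" by auto
    then show ?thesis using True le by (simp add: pmf_map)
  next
    case False
    have "P -` {False} = space (measure_pmf p) - {z. P z}" by auto
    then have "measure_pmf.prob p (P -` {False}) = 1 - measure_pmf.prob p {z. P z}"
      by (simp only: measure_pmf.prob_compl sets_measure_pmf UNIV_I)
    then show ?thesis using False le by (simp add: pmf_map)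
  qed
qed

lemma Pi_count_binomial:
  assumes "finite I"
  shows "map_pmf (\<lambda>f. card {i\<in>I. P (f i)}) (Pi_pmf I d (\<lambda>_. p)) =
         binomial_pmf (card I) (measure_pmf.prob p {z. P z})"
proof -
  let ?t = "measure_pmf.prob p {z. P z}"
  have t: "?t \<in> {0..1}" by auto
  have "Pi_pmf I (P d) (\<lambda>_. map_pmf P p) = map_pmf (\<lambda>h. P \<circ> h) (Pi_pmf I d (\<lambda>_. p))"
    by (rule Pi_pmf_map) (use assms in auto)
  then have "Pi_pmf I (P d) (\<lambda>_. bernoulli_pmf ?t) = map_pmf (\<lambda>h. P \<circ> h) (Pi_pmf I d (\<lambda>_. p))"
    by (simp add: map_bool_bernoulli)
  moreover have "binomial_pmf (card I) ?t = map_pmf (\<lambda>f. card {x\<in>I. f x}) (Pi_pmf I (P d) (\<lambda>_. bernoulli_pmf ?t))"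
    by (rule binomial_pmf_altdef'[OF assms refl t])
  ultimately show ?thesis by (simp add: map_pmf_comp o_def)
qed

lemma Pi_count_measure:
  assumes "finite I"
  shows "measure_pmf.prob (Pi_pmf I d (\<lambda>_. p)) {f. card {i\<in>I. P (f i)} = k} =
     real (card I choose k) * (measure_pmf.prob p {z. P z}) ^ k * (1 - measure_pmf.prob p {z. P z}) ^ (card I - k)"
proof -
  have "measure_pmf.prob (Pi_pmf I d (\<lambda>_. p)) {f. card {i\<in>I. P (f i)} = k} =
     measure_pmf.prob (map_pmf (\<lambda>f. card {i\<in>I. P (f i)}) (Pi_pmf I d (\<lambda>_. p))) {k}"
    by (simp add: vimage_def)
  also have "\<dots> = pmf (binomial_pmf (card I) (measure_pmf.prob p {z. P z})) k"
    by (simp add: Pi_count_binomial[OF assms] measure_pmf_single)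
  also have "\<dots> = real (card I choose k) * (measure_pmf.prob p {z. P z}) ^ k * (1 - measure_pmf.prob p {z. P z}) ^ (card I - k)"
    by (rule pmf_binomial) auto
  finally show ?thesis .
qed

lemma Pi_pmf_split2:
  assumes "finite A" "R \<subseteq> A" "C \<subseteq> A" "R \<inter> C = {}"
  shows "map_pmf (\<lambda>G. (\<lambda>i. if i \<in> R then G i else d, \<lambda>i. if i \<in> C then G i else d)) (Pi_pmf A d p) =
         pair_pmf (Pi_pmf R d p) (Pi_pmf C d p)"
proof -
  let ?split = "\<lambda>G. (\<lambda>i. if i \<in> R then G i else d, \<lambda>i. if i \<in> C then G i else d)"
  have fR: "finite R" "finite C" using assms finite_subset by blast+
  have "Pi_pmf (R \<union> C) d p = map_pmf (\<lambda>f x. if x \<in> R \<union> C then f x else d) (Pi_pmf A d p)"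
    using assms by (intro Pi_pmf_subset) auto
  then have "map_pmf ?split (Pi_pmf (R \<union> C) d p) = map_pmf ?split (Pi_pmf A d p)"
    by (simp add: map_pmf_comp) (intro map_pmf_cong refl, auto simp: fun_eq_iff)
  moreover have "Pi_pmf (R \<union> C) d p = map_pmf (\<lambda>(f,g) x. if x \<in> R then f x else g x)
             (pair_pmf (Pi_pmf R d p) (Pi_pmf C d p))"
    by (rule Pi_pmf_union) (use fR assms in auto)
  moreover have "map_pmf ?split (map_pmf (\<lambda>(f,g) x. if x \<in> R then f x else g x)
             (pair_pmf (Pi_pmf R d p) (Pi_pmf C d p))) = map_pmf id (pair_pmf (Pi_pmf R d p) (Pi_pmf C d p))"
  proof (simp only: map_pmf_comp, intro map_pmf_cong refl)
    fix z assume z: "z \<in> set_pmf (pair_pmf (Pi_pmf R d p) (Pi_pmf C d p))"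
    obtain f g where fg: "z = (f, g)" by (cases z)
    have f: "\<forall>x. x \<notin> R \<longrightarrow> f x = d" using z fg set_Pi_pmf_subset[OF fR(1), of d p] by auto
    have g: "\<forall>x. x \<notin> C \<longrightarrow> g x = d" using z fg set_Pi_pmf_subset[OF fR(2), of d p] by auto
    show "?split ((\<lambda>(f,g) x. if x \<in> R then f x else g x) z) = id z"
      using f g assms(4) fg by (auto simp: fun_eq_iff)
  qed
  ultimately show ?thesis by simp
qed

lemma measure_cond_fin:
  assumes "finite D" "set_pmf p \<subseteq> D" "set_pmf p \<inter> s \<noteq> {}"
  shows "measure_pmf.prob (cond_pmf p s) A = measure_pmf.prob p (A \<inter> s) / measure_pmf.prob p s"
proof -
  have sc: "set_pmf (cond_pmf p s) \<subseteq> D" using assms by (simp add: set_cond_pmf) blast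
  have "measure_pmf.prob (cond_pmf p s) A = (\<Sum>x\<in>D. pmf (cond_pmf p s) x * indicator A x)"
    by (rule measure_sum_fin[OF assms(1) sc])
  also have "\<dots> = (\<Sum>x\<in>D. pmf p x * indicator (A \<inter> s) x) / measure_pmf.prob p s"
    by (simp add: pmf_cond[OF assms(3)] sum_divide_distrib indicator_def) (intro sum.cong refl, auto)
  also have "\<dots> = measure_pmf.prob p (A \<inter> s) / measure_pmf.prob p s"
    by (simp add: measure_sum_fin[OF assms(1,2)])
  finally show ?thesis .
qed

lemma Ypart:
  assumes "finite R" "j0 \<in> R" "finite U" "U \<noteq> {}" "1 \<le> a"
  shows "measure_pmf.prob (Pi_pmf R d (\<lambda>_. pmf_of_set U)) {y. card {i\<in>R. y i = y j0} = a} =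
     real ((card R - 1) choose (a - 1)) * (1 / real (card U)) ^ (a - 1) * (1 - 1 / real (card U)) ^ (card R - a)"
proof -
  define R' where "R' = R - {j0}"
  have R: "R = insert j0 R'" "j0 \<notin> R'" "finite R'" using assms by (auto simp: R'_def)
  have cR: "card R' = card R - 1" using assms by (simp add: R'_def)
  let ?u = "pmf_of_set U"
  have "Pi_pmf R d (\<lambda>_. ?u) = map_pmf (\<lambda>(y,f). f(j0:=y)) (pair_pmf ?u (Pi_pmf R' d (\<lambda>_. ?u)))"
    unfolding R(1) by (rule Pi_pmf_insert[OF R(3) R(2)])
  then have "measure_pmf.prob (Pi_pmf R d (\<lambda>_. ?u)) {y. card {i\<in>R. y i = y j0} = a} =
      measure_pmf.prob (pair_pmf ?u (Pi_pmf R' d (\<lambda>_. ?u)))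
        ((\<lambda>(y,f). f(j0:=y)) -` {y. card {i\<in>R. y i = y j0} = a})"
    by simp
  also have "\<dots> = (\<Sum>x\<in>U. pmf ?u x * measure_pmf.prob (Pi_pmf R' d (\<lambda>_. ?u))
        {f. (x, f) \<in> (\<lambda>(y,f). f(j0:=y)) -` {y. card {i\<in>R. y i = y j0} = a}})"
    by (rule measure_pair_fin) (use assms in auto)
  also have "\<dots> = (\<Sum>x\<in>U. pmf ?u x * (real ((card R - 1) choose (a - 1)) * (1 / real (card U)) ^ (a - 1) * (1 - 1 / real (card U)) ^ (card R - a)))"
  proof (intro sum.cong refl arg_cong2[where f = "(*)"])
    fix x assume x: "x \<in> U"
    have c: "card {i\<in>R. (f(j0:=x)) i = (f(j0:=x)) j0} = Suc (card {i\<in>R'. f i = x})" for f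
    proof -
      have "{i\<in>R. (f(j0:=x)) i = (f(j0:=x)) j0} = insert j0 {i\<in>R'. f i = x}" using R by auto
      then show ?thesis using R by simp
    qed
    have "{f. (x, f) \<in> (\<lambda>(y,f). f(j0:=y)) -` {y. card {i\<in>R. y i = y j0} = a}} =
          {f. card {i\<in>R'. (\<lambda>y. y = x) (f i)} = a - 1}"
      using c assms(5) by auto
    moreover have "measure_pmf.prob ?u {z. z = x} = 1 / real (card U)"
      using x assms by (simp add: measure_pmf_of_set)
    ultimately show "measure_pmf.prob (Pi_pmf R' d (\<lambda>_. ?u))
        {f. (x, f) \<in> (\<lambda>(y,f). f(j0:=y)) -` {y. card {i\<in>R. y i = y j0} = a}} =
        real ((card R - 1) choose (a - 1)) * (1 / real (card U)) ^ (a - 1) * (1 - 1 / real (card U)) ^ (card R - a)"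
      using Pi_count_measure[OF R(3), of d ?u "\<lambda>y. y = x" "a - 1"] cR assms(5) by simp
  qed
  also have "\<dots> = real ((card R - 1) choose (a - 1)) * (1 / real (card U)) ^ (a - 1) * (1 - 1 / real (card U)) ^ (card R - a)"
    using assms by (simp add: sum_distrib_right[symmetric] sum_pmf_eq_1)
  finally show ?thesis .
qed

lemma keyU_fst2: "fst (keyU U S) = 2 \<longleftrightarrow> 2 \<le> card (S \<inter> U)"
  by (auto simp: keyU_def)
lemma keyU_fst1: "fst (keyU U S) = 1 \<longleftrightarrow> card (S \<inter> U) = 1"
  by (auto simp: keyU_def)
lemma keyU_fst0: "fst (keyU U S) = 0 \<longleftrightarrow> card (S \<inter> U) = 0"
  by (auto simp: keyU_def)
lemma keyU_2: "keyU U S = (2, {}) \<longleftrightarrow> 2 \<le> card (S \<inter> U)"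
  by (auto simp: keyU_def)
lemma keyU_1: "keyU U S = (1, T) \<longleftrightarrow> card (S \<inter> U) = 1 \<and> S - U = T"
  by (auto simp: keyU_def)
lemma keyU_1': "keyU U S = (Suc 0, T) \<longleftrightarrow> card (S \<inter> U) = Suc 0 \<and> S - U = T"
  by (auto simp: keyU_def)

definition pk :: "nat \<Rightarrow> nat pmf \<Rightarrow> nat set \<Rightarrow> (nat \<Rightarrow> nat \<times> nat set) \<Rightarrow> nat \<Rightarrow> nat set pmf" where
  "pk n \<Omega> U \<kappa> j = cond_pmf (slot_pmf n \<Omega>) {S. keyU U S = \<kappa> j}"

definition Qk :: "nat \<Rightarrow> nat \<Rightarrow> nat pmf \<Rightarrow> nat set \<Rightarrow> (nat \<Rightarrow> nat \<times> nat set) \<Rightarrow> (nat \<Rightarrow> nat set) pmf" where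
  "Qk n m \<Omega> U \<kappa> = Pi_pmf {..<m} {} (pk n \<Omega> U \<kappa>)"

definition Cset :: "nat \<Rightarrow> (nat \<Rightarrow> nat \<times> nat set) \<Rightarrow> nat set" where
  "Cset m \<kappa> = {j. j < m \<and> fst (\<kappa> j) = 2}"
definition Rset :: "nat \<Rightarrow> (nat \<Rightarrow> nat \<times> nat set) \<Rightarrow> nat set" where
  "Rset m \<kappa> = {j. j < m \<and> fst (\<kappa> j) = 1}"

lemma finite_Cset[simp]: "finite (Cset m \<kappa>)" by (simp add: Cset_def)
lemma finite_Rset[simp]: "finite (Rset m \<kappa>)" by (simp add: Rset_def)
lemma Cset_Rset_disj: "Cset m \<kappa> \<inter> Rset m \<kappa> = {}" by (auto simp: Cset_def Rset_def)

context
  fixes n m u :: nat and U :: "nat set" and \<Omega> :: "nat pmf" and \<kappa> :: "nat \<Rightarrow> nat \<times> nat set"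
  assumes U: "U \<subseteq> {..<n}" "card U = u" and u1: "1 \<le> u" and deg: "set_pmf \<Omega> \<subseteq> {..n}"
    and kap: "\<And>j. j < m \<Longrightarrow> \<kappa> j \<in> keyU U ` set_pmf (slot_pmf n \<Omega>)"
begin

lemma finU': "finite U" using U finite_subset by blast

lemma kap_ne: "j < m \<Longrightarrow> set_pmf (slot_pmf n \<Omega>) \<inter> {S. keyU U S = \<kappa> j} \<noteq> {}"
  using kap by force

lemma set_pk: "j < m \<Longrightarrow> set_pmf (pk n \<Omega> U \<kappa> j) = set_pmf (slot_pmf n \<Omega>) \<inter> {S. keyU U S = \<kappa> j}"
  unfolding pk_def using kap_ne by (simp add: set_cond_pmf)

lemma set_Qk:
  assumes "G \<in> set_pmf (Qk n m \<Omega> U \<kappa>)"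
  shows "\<And>j. j < m \<Longrightarrow> G j \<in> set_pmf (slot_pmf n \<Omega>) \<and> keyU U (G j) = \<kappa> j"
    and "\<And>j. \<not> j < m \<Longrightarrow> G j = {}"
  using assms unfolding Qk_def
  by (auto simp: set_Pi_pmf PiE_dflt_def set_pk)

lemma set_Qk_sub: "set_pmf (Qk n m \<Omega> U \<kappa>) \<subseteq> PiE_dflt {..<m} {} (\<lambda>_. Pow {..<n})"
proof (rule subsetI)
  fix G assume G: "G \<in> set_pmf (Qk n m \<Omega> U \<kappa>)"
  have a: "G j \<in> Pow {..<n}" if "j < m" for j using set_Qk(1)[OF G that] set_slot_pmf[OF deg] by blast
  have b: "G j = {}" if "\<not> j < m" for j using set_Qk(2)[OF G that] .
  show "G \<in> PiE_dflt {..<m} {} (\<lambda>_. Pow {..<n})" using a b by (auto simp: PiE_dflt_def)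
qed

lemma finite_set_Qk: "finite (set_pmf (Qk n m \<Omega> U \<kappa>))"
  using set_Qk_sub finite_PiE_dflt_Pow finite_subset by blast

lemma cloud_Qk: "G \<in> set_pmf (Qk n m \<Omega> U \<kappa>) \<Longrightarrow> cloud m G U = Cset m \<kappa>"
  unfolding cloud_def Cset_def
proof (intro Collect_cong conj_cong refl)
  fix j assume "G \<in> set_pmf (Qk n m \<Omega> U \<kappa>)" "j < m"
  then have "\<kappa> j = keyU U (G j)" using set_Qk(1) by simp
  then show "(2 \<le> card (G j \<inter> U)) = (fst (\<kappa> j) = 2)" by (simp add: keyU_fst2)
qed

lemma ripple_Qk: "G \<in> set_pmf (Qk n m \<Omega> U \<kappa>) \<Longrightarrow> ripple m G U = Rset m \<kappa>"
  unfolding ripple_def Rset_def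
proof (intro Collect_cong conj_cong refl)
  fix j assume "G \<in> set_pmf (Qk n m \<Omega> U \<kappa>)" "j < m"
  then have "\<kappa> j = keyU U (G j)" using set_Qk(1) by simp
  then show "(card (G j \<inter> U) = 1) = (fst (\<kappa> j) = 1)" by (simp only: keyU_fst1)
qed

lemma other_Qk: "G \<in> set_pmf (Qk n m \<Omega> U \<kappa>) \<Longrightarrow> i < m \<Longrightarrow> i \<notin> Cset m \<kappa> \<Longrightarrow> i \<notin> Rset m \<kappa> \<Longrightarrow>
   G i \<inter> U = {}"
proof -
  assume G: "G \<in> set_pmf (Qk n m \<Omega> U \<kappa>)" and i: "i < m" "i \<notin> Cset m \<kappa>" "i \<notin> Rset m \<kappa>"
  have "keyU U (G i) = \<kappa> i" using set_Qk(1)[OF G i(1)] by simp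
  then have "fst (keyU U (G i)) \<noteq> 2" "fst (keyU U (G i)) \<noteq> 1"
    using i by (auto simp: Cset_def Rset_def)
  then have "card (G i \<inter> U) = 0"
    by (auto simp: keyU_def split: if_splits)
  then show ?thesis using finU' by auto
qed

lemma pk_unif:
  assumes j: "j \<in> Rset m \<kappa>"
  shows "map_pmf (\<lambda>S. the_elem (S \<inter> U)) (pk n \<Omega> U \<kappa> j) = pmf_of_set U"
proof -
  let ?p = "slot_pmf n \<Omega>"
  have jm: "j < m" using j by (simp add: Rset_def)
  obtain S0 where S0: "S0 \<in> set_pmf ?p" "keyU U S0 = \<kappa> j" using kap[OF jm] by auto
  have "fst (keyU U S0) = 1" using S0 j by (auto simp: Rset_def)
  then have c1: "card (S0 \<inter> U) = 1" by (simp only: keyU_fst1)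
  define T where "T = S0 - U"
  have kj: "\<kappa> j = (1, T)" using S0(2) c1 by (simp add: keyU_def T_def)
  have S0n: "S0 \<subseteq> {..<n}" using S0 set_slot_pmf[OF deg] by auto
  have Tn: "T \<subseteq> {..<n}" "T \<inter> U = {}" "finite T" using S0n by (auto simp: T_def intro: finite_subset)
  let ?K = "{S. keyU U S = \<kappa> j}"
  have K: "?K = (\<lambda>z. insert z T) ` U"
  proof (intro equalityI subsetI)
    fix S assume "S \<in> ?K"
    then have S: "card (S \<inter> U) = 1" "S - U = T" by (auto simp: kj keyU_1 keyU_1')
    then obtain z where z: "S \<inter> U = {z}" by (auto simp: card_Suc_eq)
    then have "S = insert z T" using S by auto
    then show "S \<in> (\<lambda>z. insert z T) ` U" using z by auto
  next
    fix S assume "S \<in> (\<lambda>z. insert z T) ` U"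
    then obtain z where z: "z \<in> U" "S = insert z T" by auto
    then have "S \<inter> U = {z}" "S - U = T" using Tn by auto
    then show "S \<in> ?K" by (simp add: kj keyU_1 keyU_1')
  qed
  define w where "w = pmf \<Omega> (Suc (card T)) / real (n choose Suc (card T))"
  have pw: "pmf ?p (insert z T) = w" if "z \<in> U" for z
  proof -
    have "z \<notin> T" using that Tn by auto
    then have "card (insert z T) = Suc (card T)" using Tn by simp
    moreover have "insert z T \<subseteq> {..<n}" using that U Tn by auto
    ultimately show ?thesis by (simp add: pmf_slot[OF deg] w_def)
  qed
  have inj: "inj_on (\<lambda>z. insert z T) U"
  proof (rule inj_onI)
    fix z z' assume "z \<in> U" "z' \<in> U" "insert z T = insert z' T"
    then show "z = z'" using Tn by blast
  qed
  have mK: "measure_pmf.prob ?p ?K = real u * w"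
  proof -
    have "measure_pmf.prob ?p ?K = sum (pmf ?p) ((\<lambda>z. insert z T) ` U)"
      unfolding K using finU' by (simp add: measure_measure_pmf_finite)
    also have "\<dots> = (\<Sum>z\<in>U. pmf ?p (insert z T))" by (simp add: sum.reindex[OF inj])
    also have "\<dots> = (\<Sum>z\<in>U. w)" by (intro sum.cong refl) (simp add: pw)
    finally show ?thesis using U by simp
  qed
  have Kpos: "measure_pmf.prob ?p ?K > 0"
    using S0 by (intro measure_pmf_posI) auto
  then have wpos: "w \<noteq> 0" "real u \<noteq> 0" using mK u1 by auto
  show ?thesis
  proof (rule pmf_eqI)
    fix y
    have "pmf (map_pmf (\<lambda>S. the_elem (S \<inter> U)) (pk n \<Omega> U \<kappa> j)) y =
        measure_pmf.prob (pk n \<Omega> U \<kappa> j) ((\<lambda>S. the_elem (S \<inter> U)) -` {y})"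
      by (simp add: pmf_map)
    also have "\<dots> = measure_pmf.prob ?p (((\<lambda>S. the_elem (S \<inter> U)) -` {y}) \<inter> ?K) / measure_pmf.prob ?p ?K"
      unfolding pk_def
      by (rule measure_cond_fin[of "Pow {..<n}"]) (use set_slot_pmf[OF deg] kap_ne[OF jm] in auto)
    also have "((\<lambda>S. the_elem (S \<inter> U)) -` {y}) \<inter> ?K = (if y \<in> U then {insert y T} else {})"
    proof -
      have "((\<lambda>S. the_elem (S \<inter> U)) -` {y}) \<inter> ((\<lambda>z. insert z T) ` U) = (if y \<in> U then {insert y T} else {})"
      proof -
        have e: "the_elem (insert z T \<inter> U) = z" if "z \<in> U" for z
        proof -
          have "insert z T \<inter> U = {z}" using that Tn by auto
          then show ?thesis by simp
        qed
        show ?thesis using e by auto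
      qed
      then show ?thesis unfolding K .
    qed
    also have "measure_pmf.prob ?p (if y \<in> U then {insert y T} else {}) = (if y \<in> U then w else 0)"
      by (simp add: measure_pmf_single pw)
    also have "(if y \<in> U then w else 0) / measure_pmf.prob ?p ?K = pmf (pmf_of_set U) y"
    proof -
      have Une: "U \<noteq> {}" using U u1 by auto
      show ?thesis using mK wpos finU' U u1 Une by (auto simp: indicator_def)
    qed
    finally show "pmf (map_pmf (\<lambda>S. the_elem (S \<inter> U)) (pk n \<Omega> U \<kappa> j)) y = pmf (pmf_of_set U) y" .
  qed
qed

lemma pk_cloud:
  assumes j: "j \<in> Cset m \<kappa>"
  shows "pk n \<Omega> U \<kappa> j = cond_pmf (slot_pmf n \<Omega>) {S. 2 \<le> card (S \<inter> U)}"
    and "\<And>x. x \<in> U \<Longrightarrow> measure_pmf.prob (pk n \<Omega> U \<kappa> j) {S. card (S \<inter> U) = 2 \<and> x \<in> S} = q_u n \<Omega> u"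
proof -
  let ?p = "slot_pmf n \<Omega>"
  have jm: "j < m" using j by (simp add: Cset_def)
  obtain S0 where S0: "S0 \<in> set_pmf ?p" "keyU U S0 = \<kappa> j" using kap[OF jm] by auto
  have "fst (keyU U S0) = 2" using S0 j by (auto simp: Cset_def)
  then have "2 \<le> card (S0 \<inter> U)" by (simp only: keyU_fst2)
  then have kj: "\<kappa> j = (2, {})" using S0 by (simp add: keyU_2[symmetric])
  show pkc: "pk n \<Omega> U \<kappa> j = cond_pmf ?p {S. 2 \<le> card (S \<inter> U)}"
    unfolding pk_def kj keyU_2 ..
  fix x assume x: "x \<in> U"
  have ne: "set_pmf ?p \<inter> {S. 2 \<le> card (S \<inter> U)} \<noteq> {}" using kap_ne[OF jm] by (simp add: kj keyU_2)
  have "measure_pmf.prob (pk n \<Omega> U \<kappa> j) {S. card (S \<inter> U) = 2 \<and> x \<in> S} =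
      measure_pmf.prob ?p ({S. card (S \<inter> U) = 2 \<and> x \<in> S} \<inter> {S. 2 \<le> card (S \<inter> U)}) / measure_pmf.prob ?p {S. 2 \<le> card (S \<inter> U)}"
    unfolding pkc by (rule measure_cond_fin[of "Pow {..<n}"]) (use set_slot_pmf[OF deg] ne in auto)
  also have "{S. card (S \<inter> U) = 2 \<and> x \<in> S} \<inter> {S. 2 \<le> card (S \<inter> U)} = {S. card (S \<inter> U) = 2 \<and> x \<in> S}"
    by auto
  also have "measure_pmf.prob ?p {S. card (S \<inter> U) = 2 \<and> x \<in> S} / measure_pmf.prob ?p {S. 2 \<le> card (S \<inter> U)} = q_u n \<Omega> u"
    unfolding numer_eq[OF U u1 deg x] denom_eq[OF U u1 deg] q_u_def ..
  finally show "measure_pmf.prob (pk n \<Omega> U \<kappa> j) {S. card (S \<inter> U) = 2 \<and> x \<in> S} = q_u n \<Omega> u" .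
qed

lemma instate_iff:
  assumes G: "G \<in> set_pmf (Qk n m \<Omega> U \<kappa>)" and j0: "j0 \<in> Rset m \<kappa>"
    and ab: "b \<le> card (Cset m \<kappa>)" "1 \<le> a" "a \<le> card (Rset m \<kappa>) + b"
  shows "in_state m (u - 1) (card (Cset m \<kappa>) - b) (card (Rset m \<kappa>) + b - a) (G, U - {the_elem (G j0 \<inter> U)})
     \<longleftrightarrow> card {i \<in> Rset m \<kappa>. the_elem (G i \<inter> U) = the_elem (G j0 \<inter> U)} = a \<and>
         card {i \<in> Cset m \<kappa>. G i \<in> {S. card (S \<inter> U) = 2 \<and> the_elem (G j0 \<inter> U) \<in> S}} = b"
proof -
  let ?C = "Cset m \<kappa>" and ?R = "Rset m \<kappa>"
  define x where "x = the_elem (G j0 \<inter> U)"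
  define A where "A = {S. card (S \<inter> U) = 2 \<and> x \<in> S}"
  define \<alpha> where "\<alpha> = card {i \<in> ?R. the_elem (G i \<inter> U) = x}"
  define \<beta> where "\<beta> = card {i \<in> ?C. G i \<in> A}"
  have j0r: "j0 \<in> ripple m G U" using ripple_Qk[OF G] j0 by simp
  have xU: "x \<in> U" "G j0 \<inter> U = {x}" using ripple_elem[OF j0r] by (auto simp: x_def)
  have fU: "finite U" using finU' .
  have cU': "card (U - {x}) = u - 1" using xU U fU by simp
  have cardD: "card (G i \<inter> (U - {x})) = card (G i \<inter> U) - (if x \<in> G i then 1 else 0)" for i
  proof -
    have "G i \<inter> (U - {x}) = (G i \<inter> U) - {x}" by auto
    then show ?thesis using fU xU by (simp add: card_Diff_singleton_if)
  qed
  have inC: "i \<in> ?C \<longleftrightarrow> i < m \<and> 2 \<le> card (G i \<inter> U)" for i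
    using cloud_Qk[OF G] by (auto simp: cloud_def set_eq_iff)
  have inR: "i \<in> ?R \<longleftrightarrow> i < m \<and> card (G i \<inter> U) = 1" for i
    using ripple_Qk[OF G] by (auto simp: ripple_def set_eq_iff)
  have eR: "i \<in> ?R \<Longrightarrow> x \<in> G i \<longleftrightarrow> the_elem (G i \<inter> U) = x" for i
  proof -
    assume i: "i \<in> ?R"
    then have "i \<in> ripple m G U" using ripple_Qk[OF G] by simp
    note h = ripple_elem[OF this]
    show ?thesis
    proof
      assume "x \<in> G i"
      then have "x \<in> G i \<inter> U" using xU(1) by simp
      then show "the_elem (G i \<inter> U) = x" using h(1) by (metis singletonD)
    next
      assume "the_elem (G i \<inter> U) = x"
      then show "x \<in> G i" using h(3) by simp
    qed
  qed
  have cl': "cloud m G (U - {x}) = ?C - {i \<in> ?C. G i \<in> A}"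
  proof -
    have "i < m \<and> 2 \<le> card (G i \<inter> (U - {x})) \<longleftrightarrow> i \<in> ?C \<and> \<not> G i \<in> A" for i
    proof -
      have ar: "(2 \<le> c - (if P then 1 else 0)) \<longleftrightarrow> (2 \<le> c \<and> \<not> (c = 2 \<and> P))" for c :: nat and P
        by auto
      show ?thesis unfolding cardD ar inC A_def mem_Collect_eq by blast
    qed
    then show ?thesis by (auto simp: cloud_def)
  qed
  have ri': "ripple m G (U - {x}) = {i \<in> ?R. the_elem (G i \<inter> U) \<noteq> x} \<union> {i \<in> ?C. G i \<in> A}"
  proof -
    have "i < m \<and> card (G i \<inter> (U - {x})) = 1 \<longleftrightarrow>
          (i \<in> ?R \<and> the_elem (G i \<inter> U) \<noteq> x) \<or> (i \<in> ?C \<and> G i \<in> A)" for i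
    proof (cases "i \<in> ?R")
      case True
      have ar: "(c - (if P then 1 else 0) = 1) \<longleftrightarrow> ((c = 1 \<and> \<not> P) \<or> (c = 2 \<and> P))" for c :: nat and P
        by auto
      have "i < m" "card (G i \<inter> U) = 1" using True inR by auto
      then show ?thesis using eR[OF True] True unfolding cardD ar inC A_def mem_Collect_eq by auto
    next
      case False
      have ar: "(c - (if P then 1 else 0) = 1) \<longleftrightarrow> ((c = 1 \<and> \<not> P) \<or> (c = 2 \<and> P))" for c :: nat and P
        by auto
      have "i < m \<Longrightarrow> card (G i \<inter> U) \<noteq> 1" using False inR by auto
      then show ?thesis using False unfolding cardD ar inC A_def mem_Collect_eq by auto
    qed
    then show ?thesis by (auto simp: ripple_def)
  qed
  have b1: "\<beta> \<le> card ?C" unfolding \<beta>_def by (intro card_mono) auto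
  have ccl: "card (cloud m G (U - {x})) = card ?C - \<beta>"
    unfolding cl' \<beta>_def by (subst card_Diff_subset) auto
  have a1: "\<alpha> \<le> card ?R" unfolding \<alpha>_def by (intro card_mono) auto
  have a2: "1 \<le> \<alpha>"
  proof -
    have "j0 \<in> {i \<in> ?R. the_elem (G i \<inter> U) = x}" using j0 by (simp add: x_def)
    then have "{i \<in> ?R. the_elem (G i \<inter> U) = x} \<noteq> {}" by blast
    then show ?thesis unfolding \<alpha>_def by (simp add: Suc_le_eq card_gt_0_iff)
  qed
  have crl: "card (ripple m G (U - {x})) = (card ?R - \<alpha>) + \<beta>"
  proof -
    have "card ({i \<in> ?R. the_elem (G i \<inter> U) \<noteq> x} \<union> {i \<in> ?C. G i \<in> A}) =
        card {i \<in> ?R. the_elem (G i \<inter> U) \<noteq> x} + card {i \<in> ?C. G i \<in> A}"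
      using Cset_Rset_disj[of m \<kappa>] by (intro card_Un_disjoint) auto
    moreover have "{i \<in> ?R. the_elem (G i \<inter> U) \<noteq> x} = ?R - {i \<in> ?R. the_elem (G i \<inter> U) = x}" by auto
    moreover have "card (?R - {i \<in> ?R. the_elem (G i \<inter> U) = x}) = card ?R - \<alpha>"
      unfolding \<alpha>_def by (subst card_Diff_subset) auto
    ultimately show ?thesis unfolding ri' \<beta>_def by simp
  qed
  have "in_state m (u - 1) (card ?C - b) (card ?R + b - a) (G, U - {x}) \<longleftrightarrow>
        card ?C - \<beta> = card ?C - b \<and> (card ?R - \<alpha>) + \<beta> = card ?R + b - a"
    unfolding in_state_def using cU' ccl crl by simp
  also have "\<dots> \<longleftrightarrow> \<alpha> = a \<and> \<beta> = b"
    using b1 a1 a2 ab by auto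
  finally show ?thesis unfolding x_def[symmetric] \<alpha>_def \<beta>_def A_def by auto
qed


lemma finite_set_pk: "j < m \<Longrightarrow> finite (set_pmf (pk n \<Omega> U \<kappa> j))"
proof -
  assume "j < m"
  then have "set_pmf (pk n \<Omega> U \<kappa> j) \<subseteq> Pow {..<n}" using set_pk set_slot_pmf[OF deg] by auto
  then show ?thesis by (rule finite_subset) simp
qed

lemma core_j0:
  assumes j0: "j0 \<in> Rset m \<kappa>" and ab: "b \<le> card (Cset m \<kappa>)" "1 \<le> a" "a \<le> card (Rset m \<kappa>) + b"
  shows "measure_pmf.prob (Qk n m \<Omega> U \<kappa>)
      {G. in_state m (u - 1) (card (Cset m \<kappa>) - b) (card (Rset m \<kappa>) + b - a) (G, U - {the_elem (G j0 \<inter> U)})} =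
    real (card (Cset m \<kappa>) choose b) * q_u n \<Omega> u ^ b * (1 - q_u n \<Omega> u) ^ (card (Cset m \<kappa>) - b)
      * real ((card (Rset m \<kappa>) - 1) choose (a - 1)) * (1 / real u) ^ (a - 1) * (1 - 1 / real u) ^ (card (Rset m \<kappa>) - a)"
proof -
  let ?C = "Cset m \<kappa>" and ?R = "Rset m \<kappa>" and ?Q = "Qk n m \<Omega> U \<kappa>"
  define e where "e = (\<lambda>S::nat set. the_elem (S \<inter> U))"
  define A where "A = (\<lambda>x. {S. card (S \<inter> U) = 2 \<and> x \<in> S})"
  define F where "F = {(f, g). card {i \<in> ?R. e (f i) = e (f j0)} = a \<and> card {i \<in> ?C. g i \<in> A (e (f j0))} = b}"
  define \<Phi> where "\<Phi> = (\<lambda>G::nat \<Rightarrow> nat set. (\<lambda>i. if i \<in> ?R then G i else {}, \<lambda>i. if i \<in> ?C then G i else {}))"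
  define q where "q = q_u n \<Omega> u"
  define binC where "binC = real (card ?C choose b) * q ^ b * (1 - q) ^ (card ?C - b)"
  define P1 where "P1 = Pi_pmf ?R {} (pk n \<Omega> U \<kappa>)"
  define P2 where "P2 = Pi_pmf ?C {} (pk n \<Omega> U \<kappa>)"
  have Rm: "?R \<subseteq> {..<m}" "?C \<subseteq> {..<m}" by (auto simp: Rset_def Cset_def)
  have j0m: "j0 < m" using j0 Rm by auto
  let ?E = "{G. in_state m (u - 1) (card ?C - b) (card ?R + b - a) (G, U - {the_elem (G j0 \<inter> U)})}"
  have step1: "measure_pmf.prob ?Q ?E = measure_pmf.prob ?Q (\<Phi> -` F)"
  proof -
    have "G \<in> ?E \<longleftrightarrow> G \<in> \<Phi> -` F" if G: "G \<in> set_pmf ?Q" for G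
    proof -
      have "G \<in> \<Phi> -` F \<longleftrightarrow> card {i \<in> ?R. the_elem (G i \<inter> U) = the_elem (G j0 \<inter> U)} = a \<and>
         card {i \<in> ?C. G i \<in> {S. card (S \<inter> U) = 2 \<and> the_elem (G j0 \<inter> U) \<in> S}} = b"
      proof -
        have "{i \<in> ?R. e ((fst (\<Phi> G)) i) = e ((fst (\<Phi> G)) j0)} = {i \<in> ?R. the_elem (G i \<inter> U) = the_elem (G j0 \<inter> U)}"
          using j0 by (auto simp: \<Phi>_def e_def)
        moreover have "{i \<in> ?C. (snd (\<Phi> G)) i \<in> A (e ((fst (\<Phi> G)) j0))} =
            {i \<in> ?C. G i \<in> {S. card (S \<inter> U) = 2 \<and> the_elem (G j0 \<inter> U) \<in> S}}"
          using j0 by (auto simp: \<Phi>_def e_def A_def)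
        ultimately show ?thesis unfolding F_def vimage_def by (simp add: case_prod_beta)
      qed
      then show ?thesis using instate_iff[OF G j0 ab] by simp
    qed
    then have eq: "?E \<inter> set_pmf ?Q = (\<Phi> -` F) \<inter> set_pmf ?Q" by blast
    have "measure_pmf.prob ?Q ?E = measure_pmf.prob ?Q (?E \<inter> set_pmf ?Q)" by (simp only: measure_Int_set_pmf)
    also have "\<dots> = measure_pmf.prob ?Q ((\<Phi> -` F) \<inter> set_pmf ?Q)" by (simp only: eq)
    also have "\<dots> = measure_pmf.prob ?Q (\<Phi> -` F)" by (simp only: measure_Int_set_pmf)
    finally show ?thesis .
  qed
  have step2: "measure_pmf.prob ?Q (\<Phi> -` F) = measure_pmf.prob (pair_pmf P1 P2) F"
  proof -
    have "map_pmf \<Phi> ?Q = pair_pmf P1 P2"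
      unfolding \<Phi>_def Qk_def P1_def P2_def
      by (rule Pi_pmf_split2) (use Rm Cset_Rset_disj[of m \<kappa>] in auto)
    then show ?thesis by (simp only: measure_map_pmf[symmetric])
  qed
  have setP1: "set_pmf P1 = PiE_dflt ?R {} (set_pmf \<circ> pk n \<Omega> U \<kappa>)"
    unfolding P1_def by (rule set_Pi_pmf) simp
  have finP1: "finite (set_pmf P1)"
    unfolding setP1 using Rm finite_set_pk by (intro finite_PiE_dflt) auto
  have step3: "measure_pmf.prob (pair_pmf P1 P2) F = (\<Sum>f\<in>set_pmf P1. pmf P1 f * measure_pmf.prob P2 {g. (f, g) \<in> F})"
    by (rule measure_pair_fin[OF finP1]) simp
  have P2eq: "P2 = Pi_pmf ?C {} (\<lambda>_. cond_pmf (slot_pmf n \<Omega>) {S. 2 \<le> card (S \<inter> U)})"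
    unfolding P2_def by (intro Pi_pmf_cong refl pk_cloud(1)) auto
  have binC_eq: "measure_pmf.prob P2 {g. card {i \<in> ?C. g i \<in> A x} = b} = binC" if x: "x \<in> U" for x
  proof -
    let ?cc = "cond_pmf (slot_pmf n \<Omega>) {S. 2 \<le> card (S \<inter> U)}"
    have "measure_pmf.prob P2 {g. card {i \<in> ?C. g i \<in> A x} = b} =
        real (card ?C choose b) * (measure_pmf.prob ?cc {z. z \<in> A x}) ^ b * (1 - measure_pmf.prob ?cc {z. z \<in> A x}) ^ (card ?C - b)"
      unfolding P2eq by (rule Pi_count_measure) simp
    also have "\<dots> = binC"
    proof (cases "?C = {}")
      case True
      then have "b = 0" using ab by simp
      then show ?thesis using True by (simp add: binC_def)
    next
      case False
      then obtain j where j: "j \<in> ?C" by auto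
      have "measure_pmf.prob ?cc {z. z \<in> A x} = q"
        using pk_cloud(2)[OF j x] pk_cloud(1)[OF j] by (simp add: A_def q_def)
      then show ?thesis by (simp add: binC_def)
    qed
    finally show ?thesis .
  qed
  have inner: "measure_pmf.prob P2 {g. (f, g) \<in> F} = (if card {i \<in> ?R. e (f i) = e (f j0)} = a then binC else 0)"
    if f: "f \<in> set_pmf P1" for f
  proof -
    have "f j0 \<in> set_pmf (pk n \<Omega> U \<kappa> j0)" using f j0 unfolding setP1 by (auto simp: PiE_dflt_def)
    then have "keyU U (f j0) = \<kappa> j0" using set_pk[OF j0m] by auto
    then have "fst (keyU U (f j0)) = 1" using j0 by (simp add: Rset_def)
    then have "card (f j0 \<inter> U) = 1" by (simp only: keyU_fst1)
    then obtain z where "f j0 \<inter> U = {z}" by (auto simp: card_Suc_eq)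
    then have xU: "e (f j0) \<in> U" by (auto simp: e_def)
    show ?thesis
    proof (cases "card {i \<in> ?R. e (f i) = e (f j0)} = a")
      case True
      then have "{g. (f, g) \<in> F} = {g. card {i \<in> ?C. g i \<in> A (e (f j0))} = b}" by (auto simp: F_def)
      then show ?thesis using binC_eq[OF xU] True by simp
    next
      case False
      then have "{g. (f, g) \<in> F} = {}" by (auto simp: F_def)
      then show ?thesis using False by simp
    qed
  qed
  have step4: "(\<Sum>f\<in>set_pmf P1. pmf P1 f * measure_pmf.prob P2 {g. (f, g) \<in> F}) =
      binC * measure_pmf.prob P1 {f. card {i \<in> ?R. e (f i) = e (f j0)} = a}"
  proof -
    have "(\<Sum>f\<in>set_pmf P1. pmf P1 f * measure_pmf.prob P2 {g. (f, g) \<in> F}) =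
        (\<Sum>f\<in>set_pmf P1. binC * (pmf P1 f * indicator {f. card {i \<in> ?R. e (f i) = e (f j0)} = a} f))"
      by (intro sum.cong refl) (simp add: inner indicator_def)
    also have "\<dots> = binC * measure_pmf.prob P1 {f. card {i \<in> ?R. e (f i) = e (f j0)} = a}"
      by (simp add: sum_distrib_left[symmetric] measure_sum_fin[OF finP1])
    finally show ?thesis .
  qed
  have step5: "measure_pmf.prob P1 {f. card {i \<in> ?R. e (f i) = e (f j0)} = a} =
      real ((card ?R - 1) choose (a - 1)) * (1 / real u) ^ (a - 1) * (1 - 1 / real u) ^ (card ?R - a)"
  proof -
    have "Pi_pmf ?R (e {}) (\<lambda>i. map_pmf e (pk n \<Omega> U \<kappa> i)) = map_pmf (\<lambda>h. e \<circ> h) P1"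
      unfolding P1_def by (rule Pi_pmf_map) auto
    moreover have "Pi_pmf ?R (e {}) (\<lambda>i. map_pmf e (pk n \<Omega> U \<kappa> i)) = Pi_pmf ?R (e {}) (\<lambda>_. pmf_of_set U)"
      by (intro Pi_pmf_cong refl) (simp add: e_def pk_unif)
    ultimately have mp: "map_pmf (\<lambda>h. e \<circ> h) P1 = Pi_pmf ?R (e {}) (\<lambda>_. pmf_of_set U)" by simp
    have "measure_pmf.prob P1 {f. card {i \<in> ?R. e (f i) = e (f j0)} = a} =
        measure_pmf.prob (map_pmf (\<lambda>h. e \<circ> h) P1) {y. card {i \<in> ?R. y i = y j0} = a}"
      by (simp add: vimage_def)
    also have "\<dots> = real ((card ?R - 1) choose (a - 1)) * (1 / real (card U)) ^ (a - 1) * (1 - 1 / real (card U)) ^ (card ?R - a)"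
      unfolding mp by (rule Ypart) (use j0 finU' U u1 ab in auto)
    finally show ?thesis using U by simp
  qed
  show ?thesis
    unfolding step1 step2 step3 step4 step5 binC_def q_def by (simp add: mult.assoc)
qed

lemma exp_t:
  assumes Rne: "Rset m \<kappa> \<noteq> {}" and ab: "b \<le> card (Cset m \<kappa>)" "1 \<le> a" "a \<le> card (Rset m \<kappa>) + b"
  shows "(\<Sum>G\<in>set_pmf (Qk n m \<Omega> U \<kappa>). pmf (Qk n m \<Omega> U \<kappa>) G *
      measure_pmf.prob (stepU m G U) {V'. in_state m (u - 1) (card (Cset m \<kappa>) - b) (card (Rset m \<kappa>) + b - a) (G, V')}) =
    real (card (Cset m \<kappa>) choose b) * q_u n \<Omega> u ^ b * (1 - q_u n \<Omega> u) ^ (card (Cset m \<kappa>) - b)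
      * real ((card (Rset m \<kappa>) - 1) choose (a - 1)) * (1 / real u) ^ (a - 1) * (1 - 1 / real u) ^ (card (Rset m \<kappa>) - a)"
    (is "?L = ?f")
proof -
  let ?C = "Cset m \<kappa>" and ?R = "Rset m \<kappa>" and ?Q = "Qk n m \<Omega> U \<kappa>"
  let ?W = "\<lambda>G V'. in_state m (u - 1) (card ?C - b) (card ?R + b - a) (G, V')"
  define E where "E = (\<lambda>j. {G. ?W G (U - {the_elem (G j \<inter> U)})})"
  have r0: "real (card ?R) \<noteq> 0" using Rne by simp
  have st: "measure_pmf.prob (stepU m G U) {V'. ?W G V'} = (\<Sum>j\<in>?R. indicator (E j) G) / real (card ?R)"
    if G: "G \<in> set_pmf ?Q" for G
  proof -
    have rG: "ripple m G U = ?R" using ripple_Qk[OF G] .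
    have "measure_pmf.prob (stepU m G U) {V'. ?W G V'} =
        real (card (?R \<inter> (\<lambda>j. U - {the_elem (G j \<inter> U)}) -` {V'. ?W G V'})) / real (card ?R)"
      unfolding stepU_def rG using Rne by (simp add: measure_pmf_of_set)
    also have "?R \<inter> (\<lambda>j. U - {the_elem (G j \<inter> U)}) -` {V'. ?W G V'} = {j \<in> ?R. G \<in> E j}"
      by (auto simp: E_def)
    also have "real (card {j \<in> ?R. G \<in> E j}) = (\<Sum>j\<in>?R. indicator (E j) G)"
    proof -
      have "{j \<in> ?R. G \<in> E j} = ?R \<inter> {j. G \<in> E j}" by auto
      then show ?thesis by (simp add: indicator_def sum.If_cases)
    qed
    finally show ?thesis .
  qed
  have "?L = (\<Sum>G\<in>set_pmf ?Q. \<Sum>j\<in>?R. pmf ?Q G * indicator (E j) G / real (card ?R))"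
  proof (intro sum.cong refl)
    fix G assume G: "G \<in> set_pmf ?Q"
    show "pmf ?Q G * measure_pmf.prob (stepU m G U) {V'. ?W G V'} =
        (\<Sum>j\<in>?R. pmf ?Q G * indicator (E j) G / real (card ?R))"
      unfolding st[OF G] by (simp add: sum_divide_distrib sum_distrib_left)
  qed
  also have "\<dots> = (\<Sum>j\<in>?R. (\<Sum>G\<in>set_pmf ?Q. pmf ?Q G * indicator (E j) G) / real (card ?R))"
    by (subst sum.swap) (simp add: sum_divide_distrib)
  also have "\<dots> = (\<Sum>j\<in>?R. ?f / real (card ?R))"
  proof (intro sum.cong refl)
    fix j assume j: "j \<in> ?R"
    have "(\<Sum>G\<in>set_pmf ?Q. pmf ?Q G * indicator (E j) G) = measure_pmf.prob ?Q (E j)"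
      by (simp add: measure_sum_fin[OF finite_set_Qk])
    also have "\<dots> = ?f" unfolding E_def by (rule core_j0[OF j ab])
    finally show "(\<Sum>G\<in>set_pmf ?Q. pmf ?Q G * indicator (E j) G) / real (card ?R) = ?f / real (card ?R)" by simp
  qed
  also have "\<dots> = ?f" using r0 by simp
  finally show ?thesis .
qed

end

lemma key_decomp:
  "bind_pmf (map_pmf f p) (\<lambda>\<kappa>. cond_pmf p {S. f S = \<kappa>}) = p"
proof -
  have "bind_pmf (map_pmf f p) (\<lambda>x. cond_pmf p {y. (\<lambda>x y. f y = x) x y}) = p"
  proof (rule bind_cond_pmf_cancel)
    fix x assume "x \<in> set_pmf (map_pmf f p)"
    then show "set_pmf p \<inter> {y. f y = x} \<noteq> {}" by auto
  next
    fix y assume "y \<in> set_pmf p"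
    then show "set_pmf (map_pmf f p) \<inter> {x. f y = x} \<noteq> {}" by auto
  next
    fix x y assume "x \<in> set_pmf (map_pmf f p)" "y \<in> set_pmf p" "f y = x"
    then have "f -` {x. f y = x} = {y'. f y' = x}" by auto
    then show "measure_pmf.prob p {y. f y = x} = measure_pmf.prob (map_pmf f p) {x. f y = x}"
      by simp
  qed
  then show ?thesis by simp
qed

lemma graph_decomp:
  "graph_pmf n m \<Omega> = bind_pmf (Pi_pmf {..<m} (0, {}) (\<lambda>_. map_pmf (keyU U) (slot_pmf n \<Omega>)))
      (\<lambda>\<kappa>. Qk n m \<Omega> U \<kappa>)"
proof -
  have "graph_pmf n m \<Omega> = Pi_pmf {..<m} {} (\<lambda>_. bind_pmf (map_pmf (keyU U) (slot_pmf n \<Omega>))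
          (\<lambda>\<kappa>. cond_pmf (slot_pmf n \<Omega>) {S. keyU U S = \<kappa>}))"
    unfolding graph_pmf_def key_decomp ..
  also have "\<dots> = bind_pmf (Pi_pmf {..<m} (0, {}) (\<lambda>_. map_pmf (keyU U) (slot_pmf n \<Omega>)))
      (\<lambda>\<kappa>. Pi_pmf {..<m} {} (\<lambda>j. cond_pmf (slot_pmf n \<Omega>) {S. keyU U S = \<kappa> j}))"
    by (rule Pi_pmf_bind) simp
  finally show ?thesis by (simp add: Qk_def pk_def[abs_def])
qed

lemma per_U:
  fixes n m u c r a b k :: nat and U :: "nat set" and \<Omega> :: "nat pmf"
  assumes U: "U \<subseteq> {..<n}" "card U = u" and u1: "1 \<le> u" and deg: "set_pmf \<Omega> \<subseteq> {..n}"
    and r: "r > 0" and ab: "b \<le> c" "1 \<le> a" "a \<le> r + b"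
  defines "fval \<equiv> real (c choose b) * q_u n \<Omega> u ^ b * (1 - q_u n \<Omega> u) ^ (c - b)
         * real ((r - 1) choose (a - 1)) * (1 / real u) ^ (a - 1) * (1 - 1 / real u) ^ (r - a)"
  shows "(\<Sum>G\<in>PiE_dflt {..<m} {} (\<lambda>_. Pow {..<n}). pmf (graph_pmf n m \<Omega>) G *
            (if in_state m u c r (G, U) then pmf (decU n m G k) U *
               measure_pmf.prob (stepU m G U) {V'. in_state m (u - 1) (c - b) (r + b - a) (G, V')} else 0))
       = fval * (\<Sum>G\<in>PiE_dflt {..<m} {} (\<lambda>_. Pow {..<n}). pmf (graph_pmf n m \<Omega>) G *
            (if in_state m u c r (G, U) then pmf (decU n m G k) U else 0))"
proof -
  let ?D = "PiE_dflt {..<m} {} (\<lambda>_. Pow {..<n})"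
  let ?K = "Pi_pmf {..<m} (0, {}) (\<lambda>_. map_pmf (keyU U) (slot_pmf n \<Omega>))"
  define h1 where "h1 = (\<lambda>G. if in_state m u c r (G, U) then pmf (decU n m G k) U *
               measure_pmf.prob (stepU m G U) {V'. in_state m (u - 1) (c - b) (r + b - a) (G, V')} else 0)"
  define h2 where "h2 = (\<lambda>G. if in_state m u c r (G, U) then pmf (decU n m G k) U else 0)"
  have finD: "finite ?D" by (rule finite_PiE_dflt_Pow)
  have setK: "set_pmf ?K = PiE_dflt {..<m} (0, {}) (\<lambda>_. keyU U ` set_pmf (slot_pmf n \<Omega>))"
    by (simp add: set_Pi_pmf o_def)
  have finK: "finite (set_pmf ?K)"
    unfolding setK using set_slot_pmf[OF deg]
    by (intro finite_PiE_dflt) (auto intro: finite_subset)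
  have kapK: "\<And>j. j < m \<Longrightarrow> \<kappa> j \<in> keyU U ` set_pmf (slot_pmf n \<Omega>)" if "\<kappa> \<in> set_pmf ?K" for \<kappa>
    using that unfolding setK by (auto simp: PiE_dflt_def)
  have decomp: "(\<Sum>G\<in>?D. pmf (graph_pmf n m \<Omega>) G * h G) =
      (\<Sum>\<kappa>\<in>set_pmf ?K. pmf ?K \<kappa> * (\<Sum>G\<in>set_pmf (Qk n m \<Omega> U \<kappa>). pmf (Qk n m \<Omega> U \<kappa>) G * h G))" for h
  proof -
    have "(\<Sum>G\<in>?D. pmf (graph_pmf n m \<Omega>) G * h G) =
        (\<Sum>G\<in>?D. (\<Sum>\<kappa>\<in>set_pmf ?K. pmf ?K \<kappa> * pmf (Qk n m \<Omega> U \<kappa>) G) * h G)"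
    proof -
      have pg: "pmf (graph_pmf n m \<Omega>) G = (\<Sum>\<kappa>\<in>set_pmf ?K. pmf ?K \<kappa> * pmf (Qk n m \<Omega> U \<kappa>) G)" for G
        unfolding graph_decomp[of n m \<Omega> U] by (rule pmf_sum_bind[OF finK order_refl])
      show ?thesis by (simp only: pg)
    qed
    also have "\<dots> = (\<Sum>\<kappa>\<in>set_pmf ?K. pmf ?K \<kappa> * (\<Sum>G\<in>?D. pmf (Qk n m \<Omega> U \<kappa>) G * h G))"
      by (simp add: sum_distrib_right sum_distrib_left mult.assoc) (rule sum.swap)
    also have "\<dots> = (\<Sum>\<kappa>\<in>set_pmf ?K. pmf ?K \<kappa> * (\<Sum>G\<in>set_pmf (Qk n m \<Omega> U \<kappa>). pmf (Qk n m \<Omega> U \<kappa>) G * h G))"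
    proof (rule sum.cong[OF refl])
      fix \<kappa> assume \<kappa>: "\<kappa> \<in> set_pmf ?K"
      have sub: "set_pmf (Qk n m \<Omega> U \<kappa>) \<subseteq> ?D"
        by (rule set_Qk_sub[OF U u1 deg kapK[OF \<kappa>]])
      have "(\<Sum>G\<in>?D. pmf (Qk n m \<Omega> U \<kappa>) G * h G) = (\<Sum>G\<in>set_pmf (Qk n m \<Omega> U \<kappa>). pmf (Qk n m \<Omega> U \<kappa>) G * h G)"
        using sub finD by (intro sum.mono_neutral_right) (auto simp: set_pmf_eq)
      then show "pmf ?K \<kappa> * (\<Sum>G\<in>?D. pmf (Qk n m \<Omega> U \<kappa>) G * h G) =
          pmf ?K \<kappa> * (\<Sum>G\<in>set_pmf (Qk n m \<Omega> U \<kappa>). pmf (Qk n m \<Omega> U \<kappa>) G * h G)" by simp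
    qed
    finally show ?thesis .
  qed
  have per_kappa: "(\<Sum>G\<in>set_pmf (Qk n m \<Omega> U \<kappa>). pmf (Qk n m \<Omega> U \<kappa>) G * h1 G) =
       fval * (\<Sum>G\<in>set_pmf (Qk n m \<Omega> U \<kappa>). pmf (Qk n m \<Omega> U \<kappa>) G * h2 G)"
    if \<kappa>: "\<kappa> \<in> set_pmf ?K" for \<kappa>
  proof -
    let ?Q = "Qk n m \<Omega> U \<kappa>"
    note kap = kapK[OF \<kappa>]
    obtain G0 where G0: "G0 \<in> set_pmf ?Q" using set_pmf_not_empty[of ?Q] by blast
    have fU: "finite U" using U finite_subset by blast
    have Lam: "pmf (decU n m G k) U = pmf (decU n m G0 k) U" if G: "G \<in> set_pmf ?Q" for G
      by (rule decU_key[OF fU]) (use set_Qk(1)[OF U u1 deg kap G] set_Qk(1)[OF U u1 deg kap G0] in auto)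
    have ins: "in_state m u c r (G, U) = in_state m u c r (G0, U)" if G: "G \<in> set_pmf ?Q" for G
      using cloud_Qk[OF U u1 deg kap G] cloud_Qk[OF U u1 deg kap G0]
        ripple_Qk[OF U u1 deg kap G] ripple_Qk[OF U u1 deg kap G0]
      by (simp add: in_state_def)
    have s1: "(\<Sum>G\<in>set_pmf ?Q. pmf ?Q G) = 1" by (rule sum_pmf_eq_1) (auto simp: finite_set_Qk[OF U u1 deg kap])
    show ?thesis
    proof (cases "in_state m u c r (G0, U)")
      case False
      then have "h1 G = 0" "h2 G = 0" if "G \<in> set_pmf ?Q" for G
        using ins[OF that] by (auto simp: h1_def h2_def)
      then show ?thesis by simp
    next
      case True
      then have cC: "card (Cset m \<kappa>) = c" and cR: "card (Rset m \<kappa>) = r"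
        using cloud_Qk[OF U u1 deg kap G0] ripple_Qk[OF U u1 deg kap G0] by (auto simp: in_state_def)
      have Rne: "Rset m \<kappa> \<noteq> {}" using cR r by auto
      have "(\<Sum>G\<in>set_pmf ?Q. pmf ?Q G * h1 G) = pmf (decU n m G0 k) U *
           (\<Sum>G\<in>set_pmf ?Q. pmf ?Q G * measure_pmf.prob (stepU m G U) {V'. in_state m (u - 1) (c - b) (r + b - a) (G, V')})"
        unfolding sum_distrib_left
        by (intro sum.cong refl) (simp add: h1_def ins True Lam)
      also have "(\<Sum>G\<in>set_pmf ?Q. pmf ?Q G * measure_pmf.prob (stepU m G U) {V'. in_state m (u - 1) (c - b) (r + b - a) (G, V')}) = fval"
        using exp_t[OF U u1 deg kap Rne, of b a] ab unfolding cC cR fval_def by simp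
      also have "(\<Sum>G\<in>set_pmf ?Q. pmf ?Q G * h2 G) = pmf (decU n m G0 k) U"
      proof -
        have "(\<Sum>G\<in>set_pmf ?Q. pmf ?Q G * h2 G) = (\<Sum>G\<in>set_pmf ?Q. pmf ?Q G) * pmf (decU n m G0 k) U"
          unfolding sum_distrib_right by (intro sum.cong refl) (simp add: h2_def ins True Lam)
        then show ?thesis using s1 by simp
      qed
      ultimately show ?thesis by simp
    qed
  qed
  have "(\<Sum>\<kappa>\<in>set_pmf ?K. pmf ?K \<kappa> * (\<Sum>G\<in>set_pmf (Qk n m \<Omega> U \<kappa>). pmf (Qk n m \<Omega> U \<kappa>) G * h1 G)) =
      (\<Sum>\<kappa>\<in>set_pmf ?K. fval * (pmf ?K \<kappa> * (\<Sum>G\<in>set_pmf (Qk n m \<Omega> U \<kappa>). pmf (Qk n m \<Omega> U \<kappa>) G * h2 G)))"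
  proof (rule sum.cong[OF refl])
    fix \<kappa> assume \<kappa>: "\<kappa> \<in> set_pmf ?K"
    show "pmf ?K \<kappa> * (\<Sum>G\<in>set_pmf (Qk n m \<Omega> U \<kappa>). pmf (Qk n m \<Omega> U \<kappa>) G * h1 G) =
      fval * (pmf ?K \<kappa> * (\<Sum>G\<in>set_pmf (Qk n m \<Omega> U \<kappa>). pmf (Qk n m \<Omega> U \<kappa>) G * h2 G))"
      unfolding per_kappa[OF \<kappa>] by (simp only: mult.left_commute)
  qed
  then have "(\<Sum>G\<in>?D. pmf (graph_pmf n m \<Omega>) G * h1 G) = fval * (\<Sum>G\<in>?D. pmf (graph_pmf n m \<Omega>) G * h2 G)"
    unfolding decomp sum_distrib_left[symmetric] .
  then show ?thesis by (simp only: h1_def h2_def)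
qed

theorem theorem1:
  fixes n m u c r a b :: nat and \<Omega> :: "nat pmf"
  assumes deg: "set_pmf \<Omega> \<subseteq> {..n}"
    and u: "1 \<le> u" "u \<le> n"
    and r: "r > 0"
    and pos: "measure_pmf.prob (dec_state n m \<Omega> (n - u)) {s. in_state m u c r s} > 0"
    and ab: "b \<le> c" "1 \<le> a" "a \<le> r + b"
  shows "measure_pmf.prob (dec_trans n m \<Omega> (n - u))
             {(s, s'). in_state m u c r s \<and> in_state m (u - 1) (c - b) (r + b - a) s'}
         / measure_pmf.prob (dec_state n m \<Omega> (n - u)) {s. in_state m u c r s}
       = real (c choose b) * q_u n \<Omega> u ^ b * (1 - q_u n \<Omega> u) ^ (c - b)
         * real ((r - 1) choose (a - 1)) * (1 / real u) ^ (a - 1) * (1 - 1 / real u) ^ (r - a)"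
proof -
  define k where "k = n - u"
  define fval where "fval = real (c choose b) * q_u n \<Omega> u ^ b * (1 - q_u n \<Omega> u) ^ (c - b)
         * real ((r - 1) choose (a - 1)) * (1 / real u) ^ (a - 1) * (1 - 1 / real u) ^ (r - a)"
  let ?D = "PiE_dflt {..<m} {} (\<lambda>_. Pow {..<n})"
  let ?g = "graph_pmf n m \<Omega>"
  let ?P = "Pow {..<n}"
  have finD: "finite ?D" by (rule finite_PiE_dflt_Pow)
  have setg: "set_pmf ?g \<subseteq> ?D" by (rule set_graph_pmf[OF deg])
  have finP: "finite ?P" by simp
  define den where "den = (\<lambda>V. \<Sum>G\<in>?D. pmf ?g G * (if in_state m u c r (G, V) then pmf (decU n m G k) V else 0))"
  define num where "num = (\<lambda>V. \<Sum>G\<in>?D. pmf ?g G * (if in_state m u c r (G, V) then pmf (decU n m G k) V *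
               measure_pmf.prob (stepU m G V) {V'. in_state m (u - 1) (c - b) (r + b - a) (G, V')} else 0))"
  have Den: "measure_pmf.prob (dec_state n m \<Omega> k) {s. in_state m u c r s} = (\<Sum>V\<in>?P. den V)"
  proof -
    have "measure_pmf.prob (dec_state n m \<Omega> k) {s. in_state m u c r s} =
        (\<Sum>G\<in>?D. pmf ?g G * measure_pmf.prob (map_pmf (Pair G) (decU n m G k)) {s. in_state m u c r s})"
      unfolding dec_state_eq by (rule measure_bind_fin[OF finD setg])
    also have "\<dots> = (\<Sum>G\<in>?D. pmf ?g G * (\<Sum>V\<in>?P. pmf (decU n m G k) V * indicator {V. in_state m u c r (G, V)} V))"
    proof (rule sum.cong[OF refl])
      fix G
      have "measure_pmf.prob (map_pmf (Pair G) (decU n m G k)) {s. in_state m u c r s} =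
          measure_pmf.prob (decU n m G k) {V. in_state m u c r (G, V)}" by (simp add: vimage_def)
      also have "\<dots> = (\<Sum>V\<in>?P. pmf (decU n m G k) V * indicator {V. in_state m u c r (G, V)} V)"
        by (rule measure_sum_fin[OF finP set_decU])
      finally show "pmf ?g G * measure_pmf.prob (map_pmf (Pair G) (decU n m G k)) {s. in_state m u c r s} =
          pmf ?g G * (\<Sum>V\<in>?P. pmf (decU n m G k) V * indicator {V. in_state m u c r (G, V)} V)" by simp
    qed
    also have "\<dots> = (\<Sum>V\<in>?P. den V)"
      unfolding den_def sum_distrib_left
      by (subst sum.swap) (intro sum.cong refl, simp add: indicator_def)
    finally show ?thesis .
  qed
  have Num: "measure_pmf.prob (dec_trans n m \<Omega> k)
             {(s, s'). in_state m u c r s \<and> in_state m (u - 1) (c - b) (r + b - a) s'} = (\<Sum>V\<in>?P. num V)"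
  proof -
    let ?E = "{(s, s'). in_state m u c r s \<and> in_state m (u - 1) (c - b) (r + b - a) s'}"
    have "measure_pmf.prob (dec_trans n m \<Omega> k) ?E =
        (\<Sum>G\<in>?D. pmf ?g G * measure_pmf.prob (bind_pmf (decU n m G k)
            (\<lambda>V. map_pmf (\<lambda>V'. ((G, V), (G, V'))) (stepU m G V))) ?E)"
      unfolding dec_trans_eq by (rule measure_bind_fin[OF finD setg])
    also have "\<dots> = (\<Sum>G\<in>?D. pmf ?g G * (\<Sum>V\<in>?P. (if in_state m u c r (G, V) then pmf (decU n m G k) V *
               measure_pmf.prob (stepU m G V) {V'. in_state m (u - 1) (c - b) (r + b - a) (G, V')} else 0)))"
    proof (rule sum.cong[OF refl])
      fix G
      have "measure_pmf.prob (bind_pmf (decU n m G k) (\<lambda>V. map_pmf (\<lambda>V'. ((G, V), (G, V'))) (stepU m G V))) ?E =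
          (\<Sum>V\<in>?P. pmf (decU n m G k) V * measure_pmf.prob (map_pmf (\<lambda>V'. ((G, V), (G, V'))) (stepU m G V)) ?E)"
        by (rule measure_bind_fin[OF finP set_decU])
      also have "\<dots> = (\<Sum>V\<in>?P. (if in_state m u c r (G, V) then pmf (decU n m G k) V *
               measure_pmf.prob (stepU m G V) {V'. in_state m (u - 1) (c - b) (r + b - a) (G, V')} else 0))"
      proof (rule sum.cong[OF refl])
        fix V
        have "(\<lambda>V'. ((G, V), (G, V'))) -` ?E = (if in_state m u c r (G, V) then {V'. in_state m (u - 1) (c - b) (r + b - a) (G, V')} else {})"
          by auto
        then show "pmf (decU n m G k) V * measure_pmf.prob (map_pmf (\<lambda>V'. ((G, V), (G, V'))) (stepU m G V)) ?E =
            (if in_state m u c r (G, V) then pmf (decU n m G k) V *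
               measure_pmf.prob (stepU m G V) {V'. in_state m (u - 1) (c - b) (r + b - a) (G, V')} else 0)"
          by simp
      qed
      finally show "pmf ?g G * measure_pmf.prob (bind_pmf (decU n m G k) (\<lambda>V. map_pmf (\<lambda>V'. ((G, V), (G, V'))) (stepU m G V))) ?E =
          pmf ?g G * (\<Sum>V\<in>?P. (if in_state m u c r (G, V) then pmf (decU n m G k) V *
               measure_pmf.prob (stepU m G V) {V'. in_state m (u - 1) (c - b) (r + b - a) (G, V')} else 0))" by simp
    qed
    also have "\<dots> = (\<Sum>V\<in>?P. num V)"
      unfolding num_def sum_distrib_left by (rule sum.swap)
    finally show ?thesis .
  qed
  have perV: "num V = fval * den V" if V: "V \<in> ?P" for V
  proof (cases "card V = u")
    case True
    show ?thesis unfolding num_def den_def fval_def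
      by (rule per_U) (use V True u r ab deg in auto)
  next
    case False
    then have "\<not> in_state m u c r (G, V)" for G by (simp add: in_state_def)
    then show ?thesis unfolding num_def den_def by simp
  qed
  have "measure_pmf.prob (dec_trans n m \<Omega> k)
             {(s, s'). in_state m u c r s \<and> in_state m (u - 1) (c - b) (r + b - a) s'} =
        fval * measure_pmf.prob (dec_state n m \<Omega> k) {s. in_state m u c r s}"
    unfolding Num Den sum_distrib_left by (intro sum.cong refl perV)
  moreover have "measure_pmf.prob (dec_state n m \<Omega> k) {s. in_state m u c r s} \<noteq> 0"
    using pos by (simp add: k_def)
  ultimately show ?thesis unfolding k_def fval_def by simp
qed


end
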